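(* Let $f$ be a real function on $[0,1]$ satisfying the H\"older condition $|f(x')-f(x'')|\le H|x'-x''|^{1/N}$ for all $x',x''\in[0,1]$, with $H>0$ and integer $N\ge 1$. Apply the algorithm PLT (described in the context) to $f$, with the stopping rule disregarded, and let $\{x^q\}$ be the resulting infinite sequence of trial points. Assume that the numbers of parallel trials satisfy $p(l)\le Q<\infty$ for all $l>1$. Let $\bar x\in[0,1]$ be a limit point of $\{x^q\}$. Then: (i) if $\bar x\in(0,1)$, there exist two subsequences of $\{x^q\}$, one converging to $\bar x$ from the left and the other converging to $\bar x$ from the right; (ii) if $f$ has a finite number of local extrema, then $\bar x$ is a local minimizer of $f$; (iii) if $\hat x$ is another limit point of $\{x^q\}$, then $f(\bar x)=f(\hat x)$; (iv) for all $q\ge 1$, $z^q=f(x^q)\ge f(\bar x)$.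
   Context: Algorithm PLT (parallel information algorithm with local tuning) for minimizing $f$ on $[0,1]$; parameters: integer $N\ge1$, reliability parameter $r>1$, small number $\xi>0$. A "trial" is an evaluation of $f$ at a point. Step 0: perform $q(1)>1$ initial trials at $x^1=0$, $x^2=1$ and some interior points $x^3,\dots,x^{q(1)}\in(0,1)$; set $l=1$. At iteration $l$, let $q=q(l)$ be the number of trials made so far. Step 1: order all trial points as $0=x_1<x_2<\dots<x_q=1$ and set $z_i=f(x_i)$. Step 2: for $2\le j\le q$ compute $\mu_j=\max\{\lambda_j,\gamma_j,\xi\}$, where $\lambda_j=\max\{|z_i-z_{i-1}|/(x_i-x_{i-1})^{1/N}: i\in I_j\}$ with $I_2=\{2,3\}$, $I_j=\{j-1,j,j+1\}$ for $3\le j\le q-1$, $I_q=\{q-1,q\}$; and $\gamma_j=\mu\,(x_j-x_{j-1})^{1/N}/(X^{\max})^{1/N}$ with $\mu=\max\{|z_i-z_{i-1}|/(x_i-x_{i-1})^{1/N}:2\le i\le q\}$ and $X^{\max}=\max\{x_i-x_{i-1}:2\le i\le q\}$. Step 3: for $2\le j\le q$ compute the characteristic $R(j)=r\mu_j(x_j-x_{j-1})^{1/N}+\frac{(z_j-z_{j-1})^2}{r\mu_j(x_j-x_{j-1})^{1/N}}-(z_j+z_{j-1})$. Step 4: choose $p=p(l+1)\le q(l)-1$ and distinct indices $t_1,\dots,t_p$ being the indices of the $p$ largest characteristics ($t_1=\arg\max\{R(i):1<i\le q\}$, $t_k=\arg\max\{R(i):1<i\le q,\ i\ne t_s, 1\le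 s\le k-1\}$); the new trial points are $x^{q+k}=\tfrac12(x_{t_k-1}+x_{t_k})-\frac{1}{2r}\left(\frac{|z_{t_k}-z_{t_k-1}|}{\mu_{t_k}}\right)^N\operatorname{sign}(z_{t_k}-z_{t_k-1})$, $1\le k\le p$. Step 5: evaluate $f$ at these $p$ points in parallel, set $q(l+1)=q(l)+p(l+1)$, $l\leftarrow l+1$, and return to Step 1. (In the paper $f(x)=\phi(y(x))$ where $y$ is a Peano-type space-filling curve mapping $[0,1]$ onto a hyperinterval $D\subset\mathbb R^N$ and $\phi$ is Lipschitz on $D$, which yields the H\"older condition above.) *)

theory Defs
  imports Complex_Main
begin

text \<open>Trial points made so far are X 1, ..., X q.  The ordered points
  0 = x_1 < ... < x_q = 1 are given (1-based) by plt_x.\<close>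

definition plt_x :: "(nat \<Rightarrow> real) \<Rightarrow> nat \<Rightarrow> nat \<Rightarrow> real" where
  "plt_x X q i = sorted_list_of_set (X ` {1..q}) ! (i - 1)"

definition plt_z :: "(real \<Rightarrow> real) \<Rightarrow> (nat \<Rightarrow> real) \<Rightarrow> nat \<Rightarrow> nat \<Rightarrow> real" where
  "plt_z f X q i = f (plt_x X q i)"

definition plt_d :: "nat \<Rightarrow> (nat \<Rightarrow> real) \<Rightarrow> nat \<Rightarrow> nat \<Rightarrow> real" where
  "plt_d N X q i = (plt_x X q i - plt_x X q (i - 1)) powr (1 / real N)"

definition plt_slope :: "(real \<Rightarrow> real) \<Rightarrow> nat \<Rightarrow> (nat \<Rightarrow> real) \<Rightarrow> nat \<Rightarrow> nat \<Rightarrow> real" where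
  "plt_slope f N X q i = \<bar>plt_z f X q i - plt_z f X q (i - 1)\<bar> / plt_d N X q i"

text \<open>lambda_j, with I_j = {j-1, j, j+1} \<inter> {2..q} (this gives I_2 = {2,3},
  I_q = {q-1,q} and I_j = {j-1,j,j+1} otherwise).\<close>
definition plt_lambda :: "(real \<Rightarrow> real) \<Rightarrow> nat \<Rightarrow> (nat \<Rightarrow> real) \<Rightarrow> nat \<Rightarrow> nat \<Rightarrow> real" where
  "plt_lambda f N X q j = Max (plt_slope f N X q ` ({j - 1..j + 1} \<inter> {2..q}))"

definition plt_mu_glob :: "(real \<Rightarrow> real) \<Rightarrow> nat \<Rightarrow> (nat \<Rightarrow> real) \<Rightarrow> nat \<Rightarrow> real" where
  "plt_mu_glob f N X q = Max (plt_slope f N X q ` {2..q})"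

definition plt_Xmax :: "(nat \<Rightarrow> real) \<Rightarrow> nat \<Rightarrow> real" where
  "plt_Xmax X q = Max ((\<lambda>i. plt_x X q i - plt_x X q (i - 1)) ` {2..q})"

definition plt_gamma :: "(real \<Rightarrow> real) \<Rightarrow> nat \<Rightarrow> (nat \<Rightarrow> real) \<Rightarrow> nat \<Rightarrow> nat \<Rightarrow> real" where
  "plt_gamma f N X q j =
     plt_mu_glob f N X q * plt_d N X q j / (plt_Xmax X q) powr (1 / real N)"

definition plt_mu :: "(real \<Rightarrow> real) \<Rightarrow> nat \<Rightarrow> real \<Rightarrow> (nat \<Rightarrow> real) \<Rightarrow> nat \<Rightarrow> nat \<Rightarrow> real" where
  "plt_mu f N \<xi> X q j = max (plt_lambda f N X q j) (max (plt_gamma f N X q j) \<xi>)"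

definition plt_R :: "(real \<Rightarrow> real) \<Rightarrow> nat \<Rightarrow> real \<Rightarrow> real \<Rightarrow> (nat \<Rightarrow> real) \<Rightarrow> nat \<Rightarrow> nat \<Rightarrow> real" where
  "plt_R f N r \<xi> X q j =
     (let m = r * plt_mu f N \<xi> X q j * plt_d N X q j;
          zj = plt_z f X q j; zj1 = plt_z f X q (j - 1)
      in m + (zj - zj1)\<^sup>2 / m - (zj + zj1))"

definition plt_new :: "(real \<Rightarrow> real) \<Rightarrow> nat \<Rightarrow> real \<Rightarrow> real \<Rightarrow> (nat \<Rightarrow> real) \<Rightarrow> nat \<Rightarrow> nat \<Rightarrow> real" where
  "plt_new f N r \<xi> X q t =
     (plt_x X q (t - 1) + plt_x X q t) / 2
     - (1 / (2 * r)) * (\<bar>plt_z f X q t - plt_z f X q (t - 1)\<bar> / plt_mu f N \<xi> X q t) ^ N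
       * sgn (plt_z f X q t - plt_z f X q (t - 1))"

text \<open>X is a sequence of trial points (indices 1,2,...) generated by PLT
  (stopping rule disregarded), q l = number of trials after iteration l,
  p l = number of parallel trials at iteration l (l \<ge> 2).  Ties in the
  choice of the largest characteristics are broken arbitrarily.\<close>
definition PLT_run ::
  "(real \<Rightarrow> real) \<Rightarrow> nat \<Rightarrow> real \<Rightarrow> real \<Rightarrow> (nat \<Rightarrow> real) \<Rightarrow> (nat \<Rightarrow> nat) \<Rightarrow> (nat \<Rightarrow> nat) \<Rightarrow> bool" where
  "PLT_run f N r \<xi> X q p \<longleftrightarrow>
     q 1 > 1 \<and> X 1 = 0 \<and> X 2 = 1 \<and> (\<forall>i\<in>{3..q 1}. 0 < X i \<and> X i < 1) \<and>
     inj_on X {1..q 1} \<and>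
     (\<forall>l\<ge>1. 1 \<le> p (l + 1) \<and> p (l + 1) \<le> q l - 1 \<and> q (l + 1) = q l + p (l + 1) \<and>
        (\<exists>t :: nat \<Rightarrow> nat.
           inj_on t {1..p (l + 1)} \<and> t ` {1..p (l + 1)} \<subseteq> {2..q l} \<and>
           (\<forall>k\<in>{1..p (l + 1)}. \<forall>k'\<in>{1..p (l + 1)}. k < k' \<longrightarrow>
               plt_R f N r \<xi> X (q l) (t k') \<le> plt_R f N r \<xi> X (q l) (t k)) \<and>
           (\<forall>k\<in>{1..p (l + 1)}. \<forall>j\<in>{2..q l} - t ` {1..p (l + 1)}.
               plt_R f N r \<xi> X (q l) j \<le> plt_R f N r \<xi> X (q l) (t k)) \<and>
           (\<forall>k\<in>{1..p (l + 1)}. X (q l + k) = plt_new f N r \<xi> X (q l) (t k))))"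

definition seq_limit_point :: "(nat \<Rightarrow> real) \<Rightarrow> real \<Rightarrow> bool" where
  "seq_limit_point X a \<longleftrightarrow>
     (\<exists>\<sigma>. strict_mono \<sigma> \<and> (\<forall>n. \<sigma> n \<ge> 1) \<and> (\<lambda>n. X (\<sigma> n)) \<longlonglongrightarrow> a)"

definition loc_min_01 :: "(real \<Rightarrow> real) \<Rightarrow> real \<Rightarrow> bool" where
  "loc_min_01 f x \<longleftrightarrow> x \<in> {0..1} \<and>
     (\<exists>\<delta>>0. \<forall>y\<in>{0..1}. \<bar>y - x\<bar> < \<delta> \<longrightarrow> f x \<le> f y)"

definition loc_max_01 :: "(real \<Rightarrow> real) \<Rightarrow> real \<Rightarrow> bool" where
  "loc_max_01 f x \<longleftrightarrow> x \<in> {0..1} \<and>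
     (\<exists>\<delta>>0. \<forall>y\<in>{0..1}. \<bar>y - x\<bar> < \<delta> \<longrightarrow> f y \<le> f x)"

end

theory Submission
  imports Defs
begin


lemma pw_lt:
  fixes t \<theta> :: real
  assumes N: "N \<ge> 1" and t: "0 \<le> t" and th: "\<theta> > 0" and lt: "t < \<theta> ^ N"
  shows "t powr (1 / real N) < \<theta>"
proof -
  have "(\<theta> ^ N) powr (1 / real N) = \<theta>"
    using N th by (simp add: powr_realpow[symmetric] powr_powr)
  moreover have "t powr (1 / real N) < (\<theta> ^ N) powr (1 / real N)"
    using N t lt by (intro powr_less_mono2) auto
  ultimately show ?thesis by simp
qed

lemma pw_pow:
  fixes x :: real
  assumes N: "N \<ge> 1" and x: "x > 0"
  shows "(x powr (1 / real N)) ^ N = x"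
  using N x by (simp add: powr_realpow[symmetric] powr_powr)

lemma pw_mono:
  fixes x y :: real
  assumes "0 \<le> x" "x \<le> y"
  shows "x powr (1 / real N) \<le> y powr (1 / real N)"
  using assms by (intro powr_mono2) auto

definition consec :: "real set \<Rightarrow> real \<Rightarrow> real \<Rightarrow> bool" where
  "consec S u v \<longleftrightarrow> u \<in> S \<and> v \<in> S \<and> u < v \<and> (\<forall>w\<in>S. \<not> (u < w \<and> w < v))"

definition limpt :: "(nat \<Rightarrow> real set) \<Rightarrow> real \<Rightarrow> bool" where
  "limpt S xb \<longleftrightarrow> (\<forall>\<epsilon>>0. infinite {y \<in> (\<Union>l. S l). \<bar>y - xb\<bar> < \<epsilon>})"

lemma split_consec:
  fixes T :: "real set"
  assumes fin: "finite T" and dc: "\<And>s t. P t \<Longrightarrow> s \<le> t \<Longrightarrow> P s"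
    and ne1: "{s \<in> T. P s} \<noteq> {}" and ne2: "{s \<in> T. \<not> P s} \<noteq> {}"
  shows "consec T (Max {s \<in> T. P s}) (Min {s \<in> T. \<not> P s})"
proof -
  have f1: "finite {s \<in> T. P s}" "finite {s \<in> T. \<not> P s}" using fin by auto
  have a: "Max {s \<in> T. P s} \<in> T" "P (Max {s \<in> T. P s})" using Max_in[OF f1(1) ne1] by auto
  have b: "Min {s \<in> T. \<not> P s} \<in> T" "\<not> P (Min {s \<in> T. \<not> P s})" using Min_in[OF f1(2) ne2] by auto
  have lt: "Max {s \<in> T. P s} < Min {s \<in> T. \<not> P s}"
    using a b dc by (meson not_le less_imp_le)
  have "\<not> (Max {s \<in> T. P s} < w \<and> w < Min {s \<in> T. \<not> P s})" if "w \<in> T" for w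
  proof (cases "P w")
    case True hence "w \<le> Max {s \<in> T. P s}" using Max_ge[OF f1(1)] that by blast
    thus ?thesis by auto
  next
    case False hence "Min {s \<in> T. \<not> P s} \<le> w" using Min_le[OF f1(2)] that by blast
    thus ?thesis by auto
  qed
  thus ?thesis using a b lt by (auto simp: consec_def)
qed

locale plt_abs =
  fixes S :: "nat \<Rightarrow> real set" and C :: "nat \<Rightarrow> (real \<times> real) set"
    and \<rho> :: "nat \<Rightarrow> real \<Rightarrow> real \<Rightarrow> real" and f :: "real \<Rightarrow> real"
    and N :: nat and H \<kappa> \<kappa>1 K2 :: real and Q :: nat
  assumes N: "N \<ge> 1" and H: "H > 0" and kap: "0 < \<kappa>" "\<kappa> < 1" and kap1: "\<kappa>1 > 0"
    and K2: "K2 \<ge> 0"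
    and holder: "\<forall>x\<in>{0..1}. \<forall>y\<in>{0..1}. \<bar>f x - f y\<bar> \<le> H * \<bar>x - y\<bar> powr (1 / real N)"
    and S_fin: "finite (S l)" and S_sub: "S l \<subseteq> {0..1}" and S0: "0 \<in> S l" and S1: "1 \<in> S l"
    and S_mono: "S l \<subseteq> S (Suc l)"
    and C_consec: "(u, v) \<in> C l \<Longrightarrow> consec (S l) u v"
    and C_card: "card (C l) \<le> Q"
    and rho_lo: "consec (S l) u v \<Longrightarrow>
       \<kappa>1 * (v - u) powr (1 / real N) - 2 * min (f u) (f v) \<le> \<rho> l u v"
    and rho_hi: "consec (S l) u v \<Longrightarrow>
       \<rho> l u v \<le> K2 * (v - u) powr (1 / real N) - 2 * min (f u) (f v)"
    and rho_choice: "(u, v) \<in> C l \<Longrightarrow> consec (S l) a b \<Longrightarrow> (a, b) \<notin> C l \<Longrightarrow>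
       \<rho> l a b \<le> \<rho> l u v"
    and new_in: "(u, v) \<in> C l \<Longrightarrow>
       \<exists>y\<in>S (Suc l). u + \<kappa> * (v - u) \<le> y \<and> y \<le> v - \<kappa> * (v - u)"
    and new_from: "y \<in> S (Suc l) \<Longrightarrow> y \<notin> S l \<Longrightarrow>
       \<exists>(u, v)\<in>C l. u + \<kappa> * (v - u) \<le> y \<and> y \<le> v - \<kappa> * (v - u)"
begin

lemma S_mono_le: "l \<le> l' \<Longrightarrow> S l \<subseteq> S l'"
  by (rule lift_Suc_mono_le[of S]) (use S_mono in auto)

lemma C_fin: "finite (C l)"
proof -
  have "C l \<subseteq> S l \<times> S l" using C_consec by (auto simp: consec_def)
  thus ?thesis using S_fin by (meson finite_SigmaI finite_subset)
qed

lemma hol: "x \<in> {0..1} \<Longrightarrow> y \<in> {0..1} \<Longrightarrow> \<theta> > 0 \<Longrightarrow> \<bar>x - y\<bar> < \<theta> ^ N \<Longrightarrow> \<bar>f x - f y\<bar> < H * \<theta>"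
proof -
  assume a: "x \<in> {0..1}" "y \<in> {0..1}" "\<theta> > 0" "\<bar>x - y\<bar> < \<theta> ^ N"
  have "\<bar>x - y\<bar> powr (1 / real N) < \<theta>" using pw_lt[OF N _ a(3) a(4)] by simp
  with holder a H show ?thesis by (meson mult_strict_left_mono order_le_less_trans)
qed

lemma enter:
  assumes "y \<in> S m" "y \<notin> S l0"
  shows "\<exists>l\<ge>l0. y \<in> S (Suc l) \<and> y \<notin> S l"
proof -
  have "m > l0" using assms S_mono_le[of m l0] by (meson not_le subsetD less_imp_le_nat)
  then obtain d where m: "m = l0 + d" by (metis less_imp_add_positive)
  have "y \<in> S (l0 + d) \<Longrightarrow> \<exists>l\<ge>l0. y \<in> S (Suc l) \<and> y \<notin> S l" for d
  proof (induction d)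
    case 0 thus ?case using assms by simp
  next
    case (Suc d)
    show ?case
    proof (cases "y \<in> S (l0 + d)")
      case True thus ?thesis using Suc.IH by blast
    next
      case False thus ?thesis using Suc.prems by (intro exI[of _ "l0 + d"]) auto
    qed
  qed
  thus ?thesis using assms m by blast
qed

lemma limpt01: assumes "limpt S xb" shows "xb \<in> {0..1}"
proof (rule ccontr)
  assume "xb \<notin> {0..1}"
  define e where "e = (if xb < 0 then - xb else xb - 1)"
  have e: "e > 0" using \<open>xb \<notin> {0..1}\<close> by (auto simp: e_def)
  have "{y \<in> (\<Union>l. S l). \<bar>y - xb\<bar> < e} = {}"
    using S_sub \<open>xb \<notin> {0..1}\<close> by (force simp: e_def)
  with assms e show False unfolding limpt_def by (metis finite.emptyI)
qed

lemma F0: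
  assumes lp: "limpt S xb" and e: "\<epsilon> > 0"
  shows "\<exists>l\<ge>L. \<exists>(u, v)\<in>C l. xb - \<epsilon> < u \<and> v < xb + \<epsilon> \<and> v - u < \<epsilon>"
proof -
  define \<delta> where "\<delta> = \<kappa> * \<epsilon> / 4"
  have d: "\<delta> > 0" using kap e by (simp add: \<delta>_def)
  define W where "W = {y \<in> (\<Union>l. S l). \<bar>y - xb\<bar> < \<delta>}"
  have Winf: "infinite W" using lp d unfolding limpt_def W_def by blast
  then obtain y0 where "y0 \<in> W" by (metis finite.emptyI ex_in_conv)
  then obtain l1 where y0: "y0 \<in> S l1" "\<bar>y0 - xb\<bar> < \<delta>" by (auto simp: W_def)
  define l0 where "l0 = max L l1"
  have "infinite (W - S l0)" using Winf S_fin by auto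
  then obtain y where "y \<in> W - S l0" by (metis finite.emptyI ex_in_conv)
  then obtain m where y: "y \<in> S m" "y \<notin> S l0" "\<bar>y - xb\<bar> < \<delta>" by (auto simp: W_def)
  obtain l where l: "l \<ge> l0" "y \<in> S (Suc l)" "y \<notin> S l" using enter[OF y(1,2)] by blast
  obtain u v where uv: "(u, v) \<in> C l" "u + \<kappa> * (v - u) \<le> y" "y \<le> v - \<kappa> * (v - u)"
    using new_from[OF l(2,3)] by blast
  have cs: "consec (S l) u v" using C_consec[OF uv(1)] .
  have "y0 \<in> S l" using S_mono_le[of l1 l] y0 l by (auto simp: l0_def)
  have small: "v - u < \<epsilon> / 2"
  proof (rule ccontr)
    assume "\<not> v - u < \<epsilon> / 2"
    hence "\<kappa> * (v - u) \<ge> \<kappa> * (\<epsilon> / 2)" using kap by (intro mult_left_mono) auto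
    moreover have "2 * \<delta> = \<kappa> * (\<epsilon> / 2)" by (simp add: \<delta>_def)
    ultimately have "\<kappa> * (v - u) \<ge> 2 * \<delta>" by linarith
    hence "u < y0" "y0 < v" using uv y y0 by auto
    thus False using cs \<open>y0 \<in> S l\<close> by (auto simp: consec_def)
  qed
  have "u < v" using cs by (simp add: consec_def)
  have "\<delta> \<le> \<epsilon> / 4" using kap e by (simp add: \<delta>_def)
  have "\<kappa> * (v - u) \<ge> 0" using kap \<open>u < v\<close> by simp
  hence "u \<le> y" "y \<le> v" using uv by linarith+
  hence "xb - \<epsilon> < u" "v < xb + \<epsilon>" using y(3) small \<open>\<delta> \<le> \<epsilon> / 4\<close> e
    by (auto simp: abs_less_iff)
  thus ?thesis using uv(1) l small e by (intro exI[of _ l]) (auto simp: l0_def)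
qed

lemma F1:
  assumes lp: "limpt S xb" and th: "\<theta> > 0"
  shows "\<exists>l\<ge>L. \<exists>(u, v)\<in>C l. \<rho> l u v \<le> - 2 * f xb + (K2 + 2 * H) * \<theta>"
proof -
  have tN: "\<theta> ^ N > 0" using th by simp
  obtain l u v where l: "l \<ge> L" "(u, v) \<in> C l" "xb - \<theta> ^ N < u" "v < xb + \<theta> ^ N" "v - u < \<theta> ^ N"
    using F0[OF lp tN, of L] by blast
  have cs: "consec (S l) u v" using C_consec[OF l(2)] .
  hence "u \<in> S l" "v \<in> S l" "u < v" by (auto simp: consec_def)
  hence uv: "u \<in> {0..1}" "v \<in> {0..1}" "u < v" using S_sub[of l] by auto
  have xb: "xb \<in> {0..1}" using limpt01[OF lp] .
  have "(v - u) powr (1 / real N) < \<theta>" using pw_lt[OF N _ th l(5)] uv by simp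
  hence "K2 * (v - u) powr (1 / real N) \<le> K2 * \<theta>" using K2 by (simp add: mult_left_mono)
  moreover have "u \<le> xb \<or> xb \<le> u" "v \<le> xb \<or> xb \<le> v" by auto
  hence "\<bar>u - xb\<bar> < \<theta> ^ N" "\<bar>v - xb\<bar> < \<theta> ^ N" using l uv by auto
  hence "\<bar>f u - f xb\<bar> < H * \<theta>" "\<bar>f v - f xb\<bar> < H * \<theta>" using hol uv xb th by auto
  hence "min (f u) (f v) \<ge> f xb - H * \<theta>" by auto
  ultimately have "\<rho> l u v \<le> K2 * \<theta> - 2 * f xb + 2 * (H * \<theta>)"
    using rho_hi[OF cs] by linarith
  hence "\<rho> l u v \<le> - 2 * f xb + (K2 + 2 * H) * \<theta>" by (simp add: algebra_simps)
  thus ?thesis using l by blast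
qed

lemma chosen_if_big:
  assumes "(u, v) \<in> C l" "\<rho> l u v \<le> B" "consec (S l) a b" "\<rho> l a b > B"
  shows "(a, b) \<in> C l"
  using rho_choice[OF assms(1,3)] assms by force

lemma rho_gt_min:
  assumes "consec (S l) a b"
  shows "\<rho> l a b > - 2 * min (f a) (f b)"
proof -
  have "a < b" using assms by (simp add: consec_def)
  hence "(b - a) powr (1 / real N) > 0" by simp
  hence "\<kappa>1 * (b - a) powr (1 / real N) > 0" using kap1 by simp
  thus ?thesis using rho_lo[OF assms] by linarith
qed

lemma iv:
  assumes lp: "limpt S xb" and p0: "p0 \<in> S lp"
  shows "f p0 \<ge> f xb"
proof (rule ccontr)
  assume "\<not> f p0 \<ge> f xb"
  define \<eta> where "\<eta> = f xb - f p0"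
  have eta: "\<eta> > 0" using \<open>\<not> f p0 \<ge> f xb\<close> by (simp add: \<eta>_def)
  define P where "P = {y. f y \<le> f xb - \<eta> / 2}"
  define c0 where "c0 = K2 + 2 * H"
  have c0: "c0 > 0" using K2 H by (simp add: c0_def)
  define \<theta> where "\<theta> = \<eta> / c0"
  have th: "\<theta> > 0" using eta c0 by (simp add: \<theta>_def)
  have c0th: "c0 * \<theta> = \<eta>" using c0 by (simp add: \<theta>_def)
  define G where "G l \<longleftrightarrow> (\<exists>(u, v)\<in>C l. \<rho> l u v \<le> - 2 * f xb + c0 * \<theta>)" for l
  have Gex: "\<exists>l\<ge>L. G l" for L using F1[OF lp th, of L] by (simp add: G_def c0_def)
  have touch: "(a, b) \<in> C l" if "G l" "consec (S l) a b" "a \<in> P \<or> b \<in> P" for l a b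
  proof -
    obtain u v where uv: "(u, v) \<in> C l" "\<rho> l u v \<le> - 2 * f xb + c0 * \<theta>"
      using \<open>G l\<close> by (auto simp: G_def)
    have "min (f a) (f b) \<le> f xb - \<eta> / 2" using that(3) by (auto simp: P_def)
    hence "\<rho> l a b > - 2 * f xb + c0 * \<theta>" using rho_gt_min[OF that(2)] c0th by linarith
    thus ?thesis using chosen_if_big[OF uv that(2)] by blast
  qed
  have p01: "p0 \<in> {0..1}" using p0 S_sub by blast
  define \<delta>0 where "\<delta>0 = (\<eta> / (2 * H)) ^ N"
  have d0: "\<delta>0 > 0" using eta H by (simp add: \<delta>0_def)
  have near: "y \<in> P" if "y \<in> {0..1}" "\<bar>y - p0\<bar> < \<delta>0" for y
  proof -
    have "\<bar>f y - f p0\<bar> < H * (\<eta> / (2 * H))"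
      using hol[OF that(1) p01, of "\<eta> / (2 * H)"] that eta H by (simp add: \<delta>0_def)
    hence "\<bar>f y - f p0\<bar> < \<eta> / 2" using H by simp
    hence "f y < f p0 + \<eta> / 2" by linarith
    moreover have "f p0 + \<eta> / 2 = f xb - \<eta> / 2" by (simp add: \<eta>_def field_simps)
    ultimately show ?thesis unfolding P_def by simp
  qed
  have "f p0 \<le> f xb - \<eta> / 2" using eta unfolding \<eta>_def by (simp add: field_simps)
  hence p0P: "p0 \<in> P" by (simp add: P_def)
  define g where "g l = Min ((\<lambda>s. \<bar>s - p0\<bar>) ` (S l - {p0}))" for l
  have ne: "S l - {p0} \<noteq> {}" for l using S0[of l] S1[of l] by (cases "p0 = 0") auto
  have finS: "finite ((\<lambda>s. \<bar>s - p0\<bar>) ` (S l - {p0}))" for l using S_fin by simp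
  have g_low: "g l \<le> \<bar>s - p0\<bar>" if "s \<in> S l" "s \<noteq> p0" for l s
    unfolding g_def using that finS by (intro Min_le) auto
  have g_in: "\<exists>s\<in>S l - {p0}. g l = \<bar>s - p0\<bar>" for l
    unfolding g_def using Min_in[OF finS[of l]] ne[of l] by auto
  have g_pos: "g l > 0" for l using g_in[of l] by auto
  have g_le1: "g l \<le> 1" for l
  proof (cases "p0 = 0")
    case True thus ?thesis using g_low[OF S1[of l]] p01 by auto
  next
    case False thus ?thesis using g_low[OF S0[of l]] p01 by auto
  qed
  have g_mono: "g l' \<le> g l" if "l \<le> l'" for l l'
    unfolding g_def using S_mono_le[OF that] ne[of l] finS[of l']
    by (intro Min_antimono) auto
  have g_step: "\<exists>y\<in>S (Suc l). y \<noteq> p0 \<and> \<bar>y - p0\<bar> \<le> (1 - \<kappa>) * g l" if "l \<ge> lp" "G l" for l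
  proof -
    obtain s where s: "s \<in> S l" "s \<noteq> p0" "g l = \<bar>s - p0\<bar>" using g_in[of l] by auto
    have p0l: "p0 \<in> S l" using S_mono_le[OF that(1)] p0 by auto
    have cs: "consec (S l) (min p0 s) (max p0 s)"
    proof -
      have "\<not> (min p0 s < w \<and> w < max p0 s)" if "w \<in> S l" for w
      proof
        assume w: "min p0 s < w \<and> w < max p0 s"
        hence "w \<noteq> p0" "\<bar>w - p0\<bar> < \<bar>s - p0\<bar>" by auto
        thus False using g_low[OF that] s by simp
      qed
      thus ?thesis using s p0l by (auto simp: consec_def min_def max_def)
    qed
    have "(min p0 s, max p0 s) \<in> C l" using touch[OF that(2) cs] p0P by (auto simp: min_def max_def)
    then obtain y where y: "y \<in> S (Suc l)" "min p0 s + \<kappa> * (max p0 s - min p0 s) \<le> y"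
      "y \<le> max p0 s - \<kappa> * (max p0 s - min p0 s)" using new_in by blast
    show ?thesis
    proof (cases "p0 < s")
      case True
      hence m: "min p0 s = p0" "max p0 s = s" by auto
      have k: "\<kappa> * (s - p0) > 0" using kap True by simp
      have e: "(1 - \<kappa>) * (s - p0) = (s - p0) - \<kappa> * (s - p0)" by (simp add: algebra_simps)
      have "y > p0" "y - p0 \<le> (1 - \<kappa>) * (s - p0)" using y(2,3) k e unfolding m by linarith+
      moreover have "g l = s - p0" using s True by simp
      ultimately show ?thesis using y(1) by (intro bexI[of _ y]) auto
    next
      case False
      hence "s < p0" using s by simp
      hence m: "min p0 s = s" "max p0 s = p0" by auto
      have k: "\<kappa> * (p0 - s) > 0" using kap \<open>s < p0\<close> by simp
      have e: "(1 - \<kappa>) * (p0 - s) = (p0 - s) - \<kappa> * (p0 - s)" by (simp add: algebra_simps)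
      have "y < p0" "p0 - y \<le> (1 - \<kappa>) * (p0 - s)" using y(2,3) k e unfolding m by linarith+
      moreover have "g l = p0 - s" using s \<open>s < p0\<close> by simp
      ultimately show ?thesis using y(1) by (intro bexI[of _ y]) auto
    qed
  qed
  have g_decay: "\<exists>L\<ge>lp. \<forall>l\<ge>L. g l \<le> (1 - \<kappa>) ^ n" for n
  proof (induction n)
    case 0 thus ?case using g_le1 by auto
  next
    case (Suc n)
    then obtain L where L: "L \<ge> lp" "\<forall>l\<ge>L. g l \<le> (1 - \<kappa>) ^ n" by blast
    obtain l where l: "l \<ge> L" "G l" using Gex by blast
    obtain y where y: "y \<in> S (Suc l)" "y \<noteq> p0" "\<bar>y - p0\<bar> \<le> (1 - \<kappa>) * g l"
      using g_step[OF _ l(2)] l L by auto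
    have "g (Suc l) \<le> (1 - \<kappa>) * g l" using g_low[OF y(1,2)] y(3) by simp
    also have "\<dots> \<le> (1 - \<kappa>) * (1 - \<kappa>) ^ n" using L l kap by (intro mult_left_mono) auto
    finally have "g (Suc l) \<le> (1 - \<kappa>) ^ Suc n" by simp
    hence "\<forall>l'\<ge>Suc l. g l' \<le> (1 - \<kappa>) ^ Suc n" using g_mono by (meson order_trans)
    thus ?case using l L by (intro exI[of _ "Suc l"]) auto
  qed
  obtain n where "(1 - \<kappa>) ^ n < \<delta>0" using real_arch_pow_inv[OF d0, of "1 - \<kappa>"] kap by auto
  then obtain Lg where Lg: "Lg \<ge> lp" "\<forall>l\<ge>Lg. g l < \<delta>0"
    using g_decay[of n] by (meson order_le_less_trans)
  define cnt where "cnt l = card (S l \<inter> P)" for l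
  have cnt_mono: "cnt l \<le> cnt l'" if "l \<le> l'" for l l'
    unfolding cnt_def using S_mono_le[OF that] S_fin[of l'] by (intro card_mono) auto
  have cnt_grow: "cnt (Suc l) \<ge> cnt l + 1" if lL: "l \<ge> Lg" and lG: "G l" for l
  proof -
    obtain y where y: "y \<in> S (Suc l)" "y \<noteq> p0" "\<bar>y - p0\<bar> \<le> (1 - \<kappa>) * g l"
      using g_step[OF _ lG] lL Lg by auto
    have "(1 - \<kappa>) * g l < g l" using kap g_pos[of l] by (simp add: algebra_simps)
    hence lt: "\<bar>y - p0\<bar> < g l" using y by simp
    hence "y \<notin> S l" using g_low y(2) by force
    have "y \<in> P" using near[of y] y(1) S_sub lt Lg lL by force
    hence "insert y (S l \<inter> P) \<subseteq> S (Suc l) \<inter> P" using y S_mono by auto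
    hence "card (insert y (S l \<inter> P)) \<le> cnt (Suc l)"
      unfolding cnt_def using S_fin by (intro card_mono) auto
    thus ?thesis using \<open>y \<notin> S l\<close> S_fin by (simp add: cnt_def)
  qed
  have cnt_big: "\<exists>L. \<forall>l\<ge>L. cnt l \<ge> m" for m
  proof (induction m)
    case 0 thus ?case by simp
  next
    case (Suc m)
    then obtain L where L: "\<forall>l\<ge>L. cnt l \<ge> m" by blast
    obtain l where l: "l \<ge> max L Lg" "G l" using Gex by blast
    have "cnt (Suc l) \<ge> Suc m" using cnt_grow[OF _ l(2)] L l by fastforce
    hence "\<forall>l'\<ge>Suc l. cnt l' \<ge> Suc m" using cnt_mono by (meson order_trans)
    thus ?case by blast
  qed
  obtain L where L: "\<forall>l\<ge>L. cnt l \<ge> Q + 2" using cnt_big by blast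
  obtain l where l: "l \<ge> L" "G l" using Gex by blast
  define A where "A = S l \<inter> P - {1}"
  define sc where "sc a = Min {s \<in> S l. \<not> s \<le> a}" for a
  have "(\<lambda>a. (a, sc a)) ` A \<subseteq> C l"
  proof
    fix x assume "x \<in> (\<lambda>a. (a, sc a)) ` A"
    then obtain a where a: "a \<in> A" "x = (a, sc a)" by blast
    have "a \<in> S l" "a \<in> P" "a \<noteq> 1" using a by (auto simp: A_def)
    hence "a < 1" using S_sub by force
    have "consec (S l) (Max {s \<in> S l. s \<le> a}) (Min {s \<in> S l. \<not> s \<le> a})"
      using \<open>a \<in> S l\<close> S1[of l] \<open>a < 1\<close> S_fin
      by (intro split_consec) auto
    moreover have "Max {s \<in> S l. s \<le> a} = a"
      using \<open>a \<in> S l\<close> S_fin[of l] by (intro Max_eqI) auto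
    ultimately have "consec (S l) a (sc a)" by (simp add: sc_def)
    thus "x \<in> C l" using touch[OF l(2)] \<open>a \<in> P\<close> a by auto
  qed
  hence "card A \<le> card (C l)" using C_fin by (intro card_inj_on_le) (auto simp: inj_on_def)
  hence "card A \<le> Q" using C_card order_trans by blast
  moreover have "cnt l \<le> card (insert 1 A)"
    unfolding cnt_def A_def using S_fin[of l] by (intro card_mono) auto
  moreover have "finite A" using S_fin[of l] by (simp add: A_def)
  hence "card (insert 1 A) \<le> card A + 1" by (simp add: card_insert_if)
  ultimately show False using L l by fastforce
qed

lemma right_side:
  assumes lp: "limpt S xb" and x1: "xb < 1" and e: "\<epsilon> > 0"
  shows "\<exists>y\<in>(\<Union>l. S l). xb < y \<and> y < xb + \<epsilon>"
proof (rule ccontr)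
  assume no: "\<not> ?thesis"
  define \<epsilon>0 where "\<epsilon>0 = min \<epsilon> (1 - xb)"
  have e0: "\<epsilon>0 > 0" using e x1 by (simp add: \<epsilon>0_def)
  have no0: "y \<ge> xb + \<epsilon>0" if "y \<in> S l" "xb < y" for y l
    using no that by (force simp: \<epsilon>0_def)
  have xb01: "xb \<in> {0..1}" using limpt01[OF lp] .
  define a where "a l = Max {s \<in> S l. s \<le> xb}" for l
  define b where "b l = Min {s \<in> S l. \<not> s \<le> xb}" for l
  have ne1: "{s \<in> S l. s \<le> xb} \<noteq> {}" for l using S0[of l] xb01 by auto
  have ne2: "{s \<in> S l. \<not> s \<le> xb} \<noteq> {}" for l using S1[of l] x1 by auto
  have fin1: "finite {s \<in> S l. s \<le> xb}" "finite {s \<in> S l. \<not> s \<le> xb}" for l using S_fin by auto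
  have cs: "consec (S l) (a l) (b l)" for l
    unfolding a_def b_def using S_fin ne1 ne2 by (intro split_consec) auto
  have b_in: "b l \<in> S l" "b l > xb" for l using Min_in[OF fin1(2)[of l] ne2[of l]] by (auto simp: b_def)
  have a_le: "a l \<le> xb" for l using Max_in[OF fin1(1)[of l] ne1[of l]] by (auto simp: a_def)
  have b_ge: "b l \<ge> xb + \<epsilon>0" for l using no0 b_in by blast
  have b_min: "b l \<le> s" if "s \<in> S l" "s > xb" for l s
    unfolding b_def using that fin1(2) by (intro Min_le) auto
  have b_le1: "b l \<le> 1" for l using b_min[OF S1] x1 by simp
  have b_mono: "b l' \<le> b l" if "l \<le> l'" for l l'
    using b_min b_in S_mono_le[OF that] by blast
  have a_conv: "\<exists>L. \<forall>l\<ge>L. a l > xb - \<tau>" if tau: "\<tau> > 0" for \<tau>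
  proof -
    have "min \<tau> \<epsilon>0 > 0" using tau e0 by simp
    hence "infinite {y \<in> (\<Union>l. S l). \<bar>y - xb\<bar> < min \<tau> \<epsilon>0}" using lp unfolding limpt_def by blast
    then obtain y where "y \<in> {y \<in> (\<Union>l. S l). \<bar>y - xb\<bar> < min \<tau> \<epsilon>0}"
      by (metis finite.emptyI ex_in_conv)
    then obtain L where y: "y \<in> S L" "\<bar>y - xb\<bar> < min \<tau> \<epsilon>0" by auto
    have "y \<le> xb" using no0[OF y(1)] y(2) by force
    have "a l > xb - \<tau>" if "l \<ge> L" for l
    proof -
      have "y \<in> S l" using S_mono_le[OF that] y by auto
      hence "y \<le> a l" unfolding a_def using \<open>y \<le> xb\<close> fin1(1) by (intro Max_ge) auto
      thus ?thesis using y by auto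
    qed
    thus ?thesis by blast
  qed
  define \<beta> where "\<beta> = \<kappa>1 * \<epsilon>0 powr (1 / real N)"
  have beta: "\<beta> > 0" using kap1 e0 by (simp add: \<beta>_def)
  define c0 where "c0 = K2 + 2 * H"
  have c0: "c0 > 0" using K2 H by (simp add: c0_def)
  define \<theta> where "\<theta> = \<beta> / (3 * c0)"
  have th: "\<theta> > 0" using beta c0 by (simp add: \<theta>_def)
  have c0th: "c0 * \<theta> = \<beta> / 3" using c0 by (simp add: \<theta>_def)
  define \<tau> where "\<tau> = \<beta> / (6 * H)"
  have tau: "\<tau> > 0" using beta H by (simp add: \<tau>_def)
  have Htau: "2 * (H * \<tau>) = \<beta> / 3" using H by (simp add: \<tau>_def)
  have ta: "min (\<kappa> * \<epsilon>0) (\<tau> ^ N) > 0" using kap e0 tau by simp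
  obtain La where La: "\<forall>l\<ge>La. a l > xb - min (\<kappa> * \<epsilon>0) (\<tau> ^ N)" using a_conv[OF ta] by blast
  define G where "G l \<longleftrightarrow> (\<exists>(u, v)\<in>C l. \<rho> l u v \<le> - 2 * f xb + c0 * \<theta>)" for l
  have Gex: "\<exists>l\<ge>L. G l" for L using F1[OF lp th, of L] by (simp add: G_def c0_def)
  have key: "b (Suc l) \<le> b l - \<kappa> * \<epsilon>0" if lL: "l \<ge> La" and lG: "G l" for l
  proof -
    obtain u v where uv: "(u, v) \<in> C l" "\<rho> l u v \<le> - 2 * f xb + c0 * \<theta>"
      using lG by (auto simp: G_def)
    have ba: "b l - a l \<ge> \<epsilon>0" using b_ge[of l] a_le[of l] by simp
    have "\<epsilon>0 powr (1 / real N) \<le> (b l - a l) powr (1 / real N)"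
      using ba e0 by (intro pw_mono) auto
    hence "\<beta> \<le> \<kappa>1 * (b l - a l) powr (1 / real N)" unfolding \<beta>_def using kap1
      by (intro mult_left_mono) auto
    have aS: "a l \<in> S l" using Max_in[OF fin1(1)[of l] ne1[of l]] by (auto simp: a_def)
    have a01: "a l \<in> {0..1}" using aS S_sub by blast
    have "\<bar>a l - xb\<bar> < \<tau> ^ N" using La lL a_le[of l] by force
    hence "\<bar>f (a l) - f xb\<bar> < H * \<tau>" using hol[OF a01 xb01 tau] by simp
    hence "min (f (a l)) (f (b l)) < f xb + H * \<tau>" by linarith
    hence "\<rho> l (a l) (b l) > - 2 * f xb + c0 * \<theta>"
      using rho_lo[OF cs[of l]] \<open>\<beta> \<le> _\<close> Htau c0th beta by linarith
    hence "(a l, b l) \<in> C l" using chosen_if_big[OF uv cs[of l]] by blast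
    then obtain y where y: "y \<in> S (Suc l)" "a l + \<kappa> * (b l - a l) \<le> y" "y \<le> b l - \<kappa> * (b l - a l)"
      using new_in by blast
    have "\<kappa> * (b l - a l) \<ge> \<kappa> * \<epsilon>0" using ba kap by (intro mult_left_mono) auto
    moreover have "a l > xb - \<kappa> * \<epsilon>0" using La lL by force
    ultimately have "y > xb" "y \<le> b l - \<kappa> * \<epsilon>0" using y by linarith+
    thus ?thesis using b_min[OF y(1)] by linarith
  qed
  have decay: "\<exists>L. \<forall>l\<ge>L. b l \<le> 1 - real n * (\<kappa> * \<epsilon>0)" for n
  proof (induction n)
    case 0 thus ?case using b_le1 by auto
  next
    case (Suc n)
    then obtain L where L: "\<forall>l\<ge>L. b l \<le> 1 - real n * (\<kappa> * \<epsilon>0)" by blast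
    obtain l where l: "l \<ge> max L La" "G l" using Gex by blast
    have "b (Suc l) \<le> 1 - real (Suc n) * (\<kappa> * \<epsilon>0)"
      using key[OF _ l(2)] L l by (force simp: algebra_simps)
    hence "\<forall>l'\<ge>Suc l. b l' \<le> 1 - real (Suc n) * (\<kappa> * \<epsilon>0)" using b_mono by (meson order_trans)
    thus ?case by blast
  qed
  have "\<kappa> * \<epsilon>0 > 0" using kap e0 by simp
  then obtain n where n: "1 < real n * (\<kappa> * \<epsilon>0)" using ex_less_of_nat_mult by blast
  obtain L where "\<forall>l\<ge>L. b l \<le> 1 - real n * (\<kappa> * \<epsilon>0)" using decay by blast
  hence "b L < 0" using n by force
  thus False using b_in[of L] xb01 by auto
qed

lemma left_side:
  assumes lp: "limpt S xb" and x0: "xb > 0" and e: "\<epsilon> > 0"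
  shows "\<exists>y\<in>(\<Union>l. S l). xb - \<epsilon> < y \<and> y < xb"
proof (rule ccontr)
  assume no: "\<not> ?thesis"
  define \<epsilon>0 where "\<epsilon>0 = min \<epsilon> xb"
  have e0: "\<epsilon>0 > 0" using e x0 by (simp add: \<epsilon>0_def)
  have no0: "y \<le> xb - \<epsilon>0" if "y \<in> S l" "y < xb" for y l
    using no that by (force simp: \<epsilon>0_def)
  have xb01: "xb \<in> {0..1}" using limpt01[OF lp] .
  define a where "a l = Max {s \<in> S l. s < xb}" for l
  define b where "b l = Min {s \<in> S l. \<not> s < xb}" for l
  have ne1: "{s \<in> S l. s < xb} \<noteq> {}" for l using S0[of l] x0 by auto
  have ne2: "{s \<in> S l. \<not> s < xb} \<noteq> {}" for l using S1[of l] xb01 by auto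
  have fin1: "finite {s \<in> S l. s < xb}" "finite {s \<in> S l. \<not> s < xb}" for l using S_fin by auto
  have cs: "consec (S l) (a l) (b l)" for l
    unfolding a_def b_def using S_fin ne1 ne2 by (intro split_consec) auto
  have a_in: "a l \<in> S l" "a l < xb" for l using Max_in[OF fin1(1)[of l] ne1[of l]] by (auto simp: a_def)
  have b_ge: "b l \<ge> xb" for l using Min_in[OF fin1(2)[of l] ne2[of l]] by (auto simp: b_def)
  have a_le: "a l \<le> xb - \<epsilon>0" for l using no0 a_in by blast
  have a_max: "s \<le> a l" if "s \<in> S l" "s < xb" for l s
    unfolding a_def using that fin1(1) by (intro Max_ge) auto
  have a_ge0: "a l \<ge> 0" for l using a_max[OF S0] x0 by simp
  have a_mono: "a l \<le> a l'" if "l \<le> l'" for l l'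
    using a_max a_in S_mono_le[OF that] by blast
  have b_conv: "\<exists>L. \<forall>l\<ge>L. b l < xb + \<tau>" if tau: "\<tau> > 0" for \<tau>
  proof -
    have "min \<tau> \<epsilon>0 > 0" using tau e0 by simp
    hence "infinite {y \<in> (\<Union>l. S l). \<bar>y - xb\<bar> < min \<tau> \<epsilon>0}" using lp unfolding limpt_def by blast
    then obtain y where "y \<in> {y \<in> (\<Union>l. S l). \<bar>y - xb\<bar> < min \<tau> \<epsilon>0}"
      by (metis finite.emptyI ex_in_conv)
    then obtain L where y: "y \<in> S L" "\<bar>y - xb\<bar> < min \<tau> \<epsilon>0" by auto
    have "y \<ge> xb" using no0[OF y(1)] y(2) by force
    have "b l < xb + \<tau>" if "l \<ge> L" for l
    proof -
      have "y \<in> S l" using S_mono_le[OF that] y by auto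
      hence "b l \<le> y" unfolding b_def using \<open>y \<ge> xb\<close> fin1(2) by (intro Min_le) auto
      thus ?thesis using y by auto
    qed
    thus ?thesis by blast
  qed
  define \<beta> where "\<beta> = \<kappa>1 * \<epsilon>0 powr (1 / real N)"
  have beta: "\<beta> > 0" using kap1 e0 by (simp add: \<beta>_def)
  define c0 where "c0 = K2 + 2 * H"
  have c0: "c0 > 0" using K2 H by (simp add: c0_def)
  define \<theta> where "\<theta> = \<beta> / (3 * c0)"
  have th: "\<theta> > 0" using beta c0 by (simp add: \<theta>_def)
  have c0th: "c0 * \<theta> = \<beta> / 3" using c0 by (simp add: \<theta>_def)
  define \<tau> where "\<tau> = \<beta> / (6 * H)"
  have tau: "\<tau> > 0" using beta H by (simp add: \<tau>_def)
  have Htau: "2 * (H * \<tau>) = \<beta> / 3" using H by (simp add: \<tau>_def)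
  have ta: "min (\<kappa> * \<epsilon>0) (\<tau> ^ N) > 0" using kap e0 tau by simp
  obtain Lb where Lb: "\<forall>l\<ge>Lb. b l < xb + min (\<kappa> * \<epsilon>0) (\<tau> ^ N)" using b_conv[OF ta] by blast
  define G where "G l \<longleftrightarrow> (\<exists>(u, v)\<in>C l. \<rho> l u v \<le> - 2 * f xb + c0 * \<theta>)" for l
  have Gex: "\<exists>l\<ge>L. G l" for L using F1[OF lp th, of L] by (simp add: G_def c0_def)
  have key: "a (Suc l) \<ge> a l + \<kappa> * \<epsilon>0" if lL: "l \<ge> Lb" and lG: "G l" for l
  proof -
    obtain u v where uv: "(u, v) \<in> C l" "\<rho> l u v \<le> - 2 * f xb + c0 * \<theta>"
      using lG by (auto simp: G_def)
    have ba: "b l - a l \<ge> \<epsilon>0" using b_ge[of l] a_le[of l] by simp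
    have "\<epsilon>0 powr (1 / real N) \<le> (b l - a l) powr (1 / real N)"
      using ba e0 by (intro pw_mono) auto
    hence "\<beta> \<le> \<kappa>1 * (b l - a l) powr (1 / real N)" unfolding \<beta>_def using kap1
      by (intro mult_left_mono) auto
    have bS: "b l \<in> S l" using Min_in[OF fin1(2)[of l] ne2[of l]] by (auto simp: b_def)
    have b01: "b l \<in> {0..1}" using bS S_sub by blast
    have "\<bar>b l - xb\<bar> < \<tau> ^ N" using Lb lL b_ge[of l] by force
    hence "\<bar>f (b l) - f xb\<bar> < H * \<tau>" using hol[OF b01 xb01 tau] by simp
    hence "min (f (a l)) (f (b l)) < f xb + H * \<tau>" by linarith
    hence "\<rho> l (a l) (b l) > - 2 * f xb + c0 * \<theta>"
      using rho_lo[OF cs[of l]] \<open>\<beta> \<le> _\<close> Htau c0th beta by linarith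
    hence "(a l, b l) \<in> C l" using chosen_if_big[OF uv cs[of l]] by blast
    then obtain y where y: "y \<in> S (Suc l)" "a l + \<kappa> * (b l - a l) \<le> y" "y \<le> b l - \<kappa> * (b l - a l)"
      using new_in by blast
    have "\<kappa> * (b l - a l) \<ge> \<kappa> * \<epsilon>0" using ba kap by (intro mult_left_mono) auto
    moreover have "b l < xb + \<kappa> * \<epsilon>0" using Lb lL by force
    ultimately have "y < xb" "y \<ge> a l + \<kappa> * \<epsilon>0" using y by linarith+
    thus ?thesis using a_max[OF y(1)] by linarith
  qed
  have decay: "\<exists>L. \<forall>l\<ge>L. a l \<ge> real n * (\<kappa> * \<epsilon>0)" for n
  proof (induction n)
    case 0 thus ?case using a_ge0 by auto
  next
    case (Suc n)
    then obtain L where L: "\<forall>l\<ge>L. a l \<ge> real n * (\<kappa> * \<epsilon>0)" by blast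
    obtain l where l: "l \<ge> max L Lb" "G l" using Gex by blast
    have "a (Suc l) \<ge> real (Suc n) * (\<kappa> * \<epsilon>0)"
      using key[OF _ l(2)] L l by (force simp: algebra_simps)
    hence "\<forall>l'\<ge>Suc l. a l' \<ge> real (Suc n) * (\<kappa> * \<epsilon>0)" using a_mono by (meson order_trans)
    thus ?case by blast
  qed
  have "\<kappa> * \<epsilon>0 > 0" using kap e0 by simp
  then obtain n where n: "1 < real n * (\<kappa> * \<epsilon>0)" using ex_less_of_nat_mult by blast
  obtain L where "\<forall>l\<ge>L. a l \<ge> real n * (\<kappa> * \<epsilon>0)" using decay by blast
  hence "a L > 1" using n by force
  thus False using a_in[of L] xb01 by auto
qed

end



lemma holder_cont:
  fixes f :: "real \<Rightarrow> real"
  assumes N: "N \<ge> 1" and H: "H > 0"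
    and holder: "\<forall>x\<in>{0..1}. \<forall>y\<in>{0..1}. \<bar>f x - f y\<bar> \<le> H * \<bar>x - y\<bar> powr (1 / real N)"
  shows "continuous_on {0..1} f"
proof -
  have "uniformly_continuous_on {0..1} f"
    unfolding uniformly_continuous_on_def
  proof (intro allI impI)
    fix e :: real assume e: "e > 0"
    have th: "e / H > 0" using e H by simp
    show "\<exists>d>0. \<forall>x\<in>{0..1}. \<forall>x'\<in>{0..1}. dist x' x < d \<longrightarrow> dist (f x') (f x) < e"
    proof (intro exI[of _ "(e / H) ^ N"] conjI ballI impI)
      show "(e / H) ^ N > 0" using th by simp
      fix x x' :: real assume x: "x \<in> {0..1}" and x': "x' \<in> {0..1}" and d: "dist x' x < (e / H) ^ N"
      have "\<bar>x' - x\<bar> powr (1 / real N) < e / H" using pw_lt[OF N _ th] d by (simp add: dist_real_def)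
      hence "H * \<bar>x' - x\<bar> powr (1 / real N) < e" using H by (simp add: field_simps)
      thus "dist (f x') (f x) < e" using holder x x' by (force simp: dist_real_def)
    qed
  qed
  thus ?thesis by (rule uniformly_continuous_imp_continuous)
qed

lemma interior_max:
  fixes f :: "real \<Rightarrow> real"
  assumes cont: "continuous_on {0..1} f" and lo: "0 \<le> lo" and hi: "hi \<le> 1"
    and w: "lo < w" "w < hi" and fw: "f lo \<le> f w" "f hi \<le> f w"
  shows "\<exists>c. lo < c \<and> c < hi \<and> loc_max_01 f c"
proof -
  have "continuous_on {lo..hi} f" by (rule continuous_on_subset[OF cont]) (use lo hi in auto)
  then obtain c where c: "c \<in> {lo..hi}" "\<forall>t\<in>{lo..hi}. f t \<le> f c"
    using continuous_attains_sup[of "{lo..hi}" f] w by auto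
  define c' where "c' = (if c = lo \<or> c = hi then w else c)"
  have c'1: "lo < c'" "c' < hi" using c w by (auto simp: c'_def)
  have c'2: "\<forall>t\<in>{lo..hi}. f t \<le> f c'"
  proof (cases "c = lo \<or> c = hi")
    case True
    hence "f c \<le> f w" using fw by auto
    thus ?thesis using c True by (auto simp: c'_def intro: order_trans)
  next
    case False thus ?thesis using c by (simp add: c'_def)
  qed
  have "loc_max_01 f c'"
    unfolding loc_max_01_def
  proof (intro conjI exI[of _ "min (c' - lo) (hi - c')"] ballI impI)
    show "c' \<in> {0..1}" using c'1 lo hi by auto
    show "min (c' - lo) (hi - c') > 0" using c'1 by simp
    fix y assume "y \<in> {0..1}" "\<bar>y - c'\<bar> < min (c' - lo) (hi - c')"
    hence "y \<in> {lo..hi}" by auto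
    thus "f y \<le> f c'" using c'2 by blast
  qed
  thus ?thesis using c'1 by blast
qed

lemma loc_min_from_sides:
  fixes f :: "real \<Rightarrow> real"
  assumes cont: "continuous_on {0..1} f"
    and fin: "finite {x. loc_min_01 f x \<or> loc_max_01 f x}"
    and xb: "xb \<in> {0..1}"
    and R: "\<And>\<epsilon>. xb < 1 \<Longrightarrow> \<epsilon> > 0 \<Longrightarrow> \<exists>w. xb < w \<and> w < xb + \<epsilon> \<and> f w \<ge> f xb"
    and L: "\<And>\<epsilon>. xb > 0 \<Longrightarrow> \<epsilon> > 0 \<Longrightarrow> \<exists>w. xb - \<epsilon> < w \<and> w < xb \<and> f w \<ge> f xb"
  shows "loc_min_01 f xb"
proof (rule ccontr)
  assume nm: "\<not> loc_min_01 f xb"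
  define E where "E = {x. loc_min_01 f x \<or> loc_max_01 f x} - {xb}"
  have finE: "finite E" using fin by (simp add: E_def)
  define \<delta>0 where "\<delta>0 = (if E = {} then 1 else Min ((\<lambda>e. \<bar>e - xb\<bar>) ` E))"
  have d0: "\<delta>0 > 0"
  proof (cases "E = {}")
    case True thus ?thesis by (simp add: \<delta>0_def)
  next
    case False
    have "Min ((\<lambda>e. \<bar>e - xb\<bar>) ` E) \<in> (\<lambda>e. \<bar>e - xb\<bar>) ` E" using False finE by (intro Min_in) auto
    thus ?thesis using False by (auto simp: \<delta>0_def E_def)
  qed
  have farE: "\<bar>c - xb\<bar> \<ge> \<delta>0" if "loc_max_01 f c" "c \<noteq> xb" for c
  proof -
    have "c \<in> E" using that by (simp add: E_def)
    hence "E \<noteq> {}" by auto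
    thus ?thesis using \<open>c \<in> E\<close> finE by (auto simp: \<delta>0_def intro: Min_le)
  qed
  have "\<not> (\<forall>y\<in>{0..1}. \<bar>y - xb\<bar> < \<delta>0 \<longrightarrow> f xb \<le> f y)"
    using nm xb d0 unfolding loc_min_01_def by blast
  then obtain y where y: "y \<in> {0..1}" "\<bar>y - xb\<bar> < \<delta>0" "f y < f xb" by auto
  have "y \<noteq> xb" using y by auto
  show False
  proof (cases "xb < y")
    case True
    hence "xb < 1" using y by auto
    obtain w where w: "xb < w" "w < xb + (y - xb)" "f w \<ge> f xb" using R[OF \<open>xb < 1\<close>, of "y - xb"] True by auto
    obtain c where c: "xb < c" "c < y" "loc_max_01 f c"
      using interior_max[OF cont _ _ w(1), of y] w y xb by auto
    have "\<bar>c - xb\<bar> < \<delta>0" using c y True by auto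
    thus False using farE[OF c(3)] c by auto
  next
    case False
    hence "y < xb" using \<open>y \<noteq> xb\<close> by auto
    hence "xb > 0" using y by auto
    obtain w where w: "xb - (xb - y) < w" "w < xb" "f w \<ge> f xb" using L[OF \<open>xb > 0\<close>, of "xb - y"] \<open>y < xb\<close> by auto
    obtain c where c: "y < c" "c < xb" "loc_max_01 f c"
      using interior_max[OF cont _ _ _ w(2), of y] w y xb by auto
    have "\<bar>c - xb\<bar> < \<delta>0" using c y \<open>y < xb\<close> by auto
    thus False using farE[OF c(3)] c by auto
  qed
qed

lemma subseq_right:
  fixes X :: "nat \<Rightarrow> real"
  assumes A: "\<And>\<epsilon>. \<epsilon> > 0 \<Longrightarrow> \<exists>k\<ge>1. a < X k \<and> X k < a + \<epsilon>"
  shows "\<exists>\<sigma>. strict_mono \<sigma> \<and> (\<forall>n. \<sigma> n \<ge> 1) \<and> (\<forall>n. X (\<sigma> n) > a) \<and> (\<lambda>n. X (\<sigma> n)) \<longlonglongrightarrow> a"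
proof -
  define P where "P n k \<longleftrightarrow> k \<ge> 1 \<and> a < X k \<and> X k < a + 1 / (real n + 1)" for n k
  have P0: "\<exists>k. P 0 k" using A[of 1] by (auto simp: P_def)
  have Pstep: "\<exists>k'. P (Suc n) k' \<and> k < k'" if "P n k" for n k
  proof -
    define D where "D = (\<lambda>i. X i - a) ` {i \<in> {1..k}. a < X i}"
    have finD: "finite D" "D \<noteq> {}" using that by (auto simp: D_def P_def)
    have "Min D \<in> D" using finD by (rule Min_in)
    hence mD: "Min D > 0" by (auto simp: D_def)
    define \<epsilon> where "\<epsilon> = min (1 / (real (Suc n) + 1)) (Min D)"
    have e: "\<epsilon> > 0" using mD by (simp add: \<epsilon>_def)
    obtain k' where k': "k' \<ge> 1" "a < X k'" "X k' < a + \<epsilon>" using A[OF e] by blast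
    have "k < k'"
    proof (rule ccontr)
      assume "\<not> k < k'"
      hence "X k' - a \<in> D" using k' by (auto simp: D_def)
      hence "Min D \<le> X k' - a" using finD by (intro Min_le) auto
      thus False using k' by (simp add: \<epsilon>_def)
    qed
    moreover have "\<epsilon> \<le> 1 / (real (Suc n) + 1)" by (simp add: \<epsilon>_def)
    ultimately show ?thesis using k' unfolding P_def by (intro exI[of _ k']) auto
  qed
  obtain \<sigma> where \<sigma>: "\<forall>n. P n (\<sigma> n) \<and> \<sigma> n < \<sigma> (Suc n)"
    using dependent_nat_choice[of P "\<lambda>n k k'. k < k'"] P0 Pstep by blast
  have sm: "strict_mono \<sigma>" using \<sigma> by (simp add: strict_mono_Suc_iff)
  have lim: "(\<lambda>n. X (\<sigma> n)) \<longlonglongrightarrow> a"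
    unfolding LIMSEQ_iff
  proof (intro allI impI)
    fix r :: real assume r: "r > 0"
    obtain n0 where n0: "inverse (real (Suc n0)) < r" using reals_Archimedean[OF r] by blast
    have "norm (X (\<sigma> n) - a) < r" if "n \<ge> n0" for n
    proof -
      have "1 / (real n + 1) \<le> 1 / (real n0 + 1)" using that by (simp add: frac_le)
      moreover have "1 / (real n0 + 1) < r" using n0 by (simp add: inverse_eq_divide add.commute)
      moreover have "a < X (\<sigma> n)" "X (\<sigma> n) < a + 1 / (real n + 1)" using \<sigma> by (auto simp: P_def)
      ultimately show ?thesis by (simp add: abs_less_iff)
    qed
    thus "\<exists>no. \<forall>n\<ge>no. norm (X (\<sigma> n) - a) < r" by blast
  qed
  show ?thesis using sm lim \<sigma> by (auto simp: P_def)
qed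

lemma subseq_left:
  fixes X :: "nat \<Rightarrow> real"
  assumes A: "\<And>\<epsilon>. \<epsilon> > 0 \<Longrightarrow> \<exists>k\<ge>1. a - \<epsilon> < X k \<and> X k < a"
  shows "\<exists>\<sigma>. strict_mono \<sigma> \<and> (\<forall>n. \<sigma> n \<ge> 1) \<and> (\<forall>n. X (\<sigma> n) < a) \<and> (\<lambda>n. X (\<sigma> n)) \<longlonglongrightarrow> a"
proof -
  have "\<exists>k\<ge>1. - a < - X k \<and> - X k < - a + \<epsilon>" if eps: "\<epsilon> > 0" for \<epsilon>
  proof -
    obtain k where "k \<ge> 1" "a - \<epsilon> < X k" "X k < a" using A[OF eps] by blast
    thus ?thesis by (intro exI[of _ k]) auto
  qed
  from subseq_right[of "- a" "\<lambda>k. - X k", OF this]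
  obtain \<sigma> where "strict_mono \<sigma>" "\<forall>n. \<sigma> n \<ge> 1" "\<forall>n. - X (\<sigma> n) > - a" "(\<lambda>n. - X (\<sigma> n)) \<longlonglongrightarrow> - a"
    by blast
  moreover have "(\<lambda>n. X (\<sigma> n)) \<longlonglongrightarrow> a" using tendsto_minus[OF calculation(4)] by simp
  ultimately show ?thesis by auto
qed




section \<open>Sorted points\<close>

lemma px_lt:
  assumes inj: "inj_on X {1..L}" and ij: "1 \<le> i" "i < j" "j \<le> L"
  shows "plt_x X L i < plt_x X L j"
proof -
  let ?xs = "sorted_list_of_set (X ` {1..L})"
  have len: "length ?xs = L" using inj by (simp add: card_image)
  have "sorted_wrt (<) ?xs" by (rule strict_sorted_list_of_set)
  hence "?xs ! (i - 1) < ?xs ! (j - 1)" using ij len by (auto simp: sorted_wrt_iff_nth_less)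
  thus ?thesis by (simp add: plt_x_def)
qed

lemma px_le:
  assumes inj: "inj_on X {1..L}" and ij: "1 \<le> i" "i \<le> j" "j \<le> L"
  shows "plt_x X L i \<le> plt_x X L j"
  using px_lt[OF inj, of i j] ij by (cases "i = j") auto

lemma px_in:
  assumes inj: "inj_on X {1..L}" and i: "1 \<le> i" "i \<le> L"
  shows "plt_x X L i \<in> X ` {1..L}"
proof -
  let ?xs = "sorted_list_of_set (X ` {1..L})"
  have len: "length ?xs = L" using inj by (simp add: card_image)
  have "?xs ! (i - 1) \<in> set ?xs" using i len by (intro nth_mem) auto
  thus ?thesis by (simp add: plt_x_def)
qed

lemma px_ex:
  assumes inj: "inj_on X {1..L}" and s: "s \<in> X ` {1..L}"
  shows "\<exists>i. 1 \<le> i \<and> i \<le> L \<and> plt_x X L i = s"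
proof -
  let ?xs = "sorted_list_of_set (X ` {1..L})"
  have len: "length ?xs = L" using inj by (simp add: card_image)
  have "s \<in> set ?xs" using s by simp
  then obtain m where m0: "m < length ?xs" "?xs ! m = s" unfolding in_set_conv_nth by blast
  hence m: "m < L" "?xs ! m = s" using len by auto
  thus ?thesis by (intro exI[of _ "Suc m"]) (auto simp: plt_x_def)
qed

lemma px_inj:
  assumes inj: "inj_on X {1..L}" and "1 \<le> i" "i \<le> L" "1 \<le> j" "j \<le> L" "plt_x X L i = plt_x X L j"
  shows "i = j"
  using px_lt[OF inj, of i j] px_lt[OF inj, of j i] assms by (metis less_irrefl nat_neq_iff)

lemma px_consec:
  assumes inj: "inj_on X {1..L}" and j: "2 \<le> j" "j \<le> L"
  shows "consec (X ` {1..L}) (plt_x X L (j - 1)) (plt_x X L j)"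
  unfolding consec_def
proof (intro conjI ballI)
  show "plt_x X L (j - 1) \<in> X ` {1..L}" "plt_x X L j \<in> X ` {1..L}" using px_in[OF inj] j by auto
  show "plt_x X L (j - 1) < plt_x X L j" using px_lt[OF inj] j by auto
  fix w assume "w \<in> X ` {1..L}"
  then obtain m where m: "1 \<le> m" "m \<le> L" "plt_x X L m = w" using px_ex[OF inj] by blast
  show "\<not> (plt_x X L (j - 1) < w \<and> w < plt_x X L j)"
  proof (cases "m \<le> j - 1")
    case True
    have "plt_x X L m \<le> plt_x X L (j - 1)" by (rule px_le[OF inj]) (use m j True in auto)
    thus ?thesis using m by auto
  next
    case False
    have "plt_x X L j \<le> plt_x X L m" by (rule px_le[OF inj]) (use m j False in auto)
    thus ?thesis using m by auto
  qed
qed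

lemma px_consec_ex:
  assumes inj: "inj_on X {1..L}" and cs: "consec (X ` {1..L}) u v"
  shows "\<exists>j\<in>{2..L}. u = plt_x X L (j - 1) \<and> v = plt_x X L j"
proof -
  have uv: "u \<in> X ` {1..L}" "v \<in> X ` {1..L}" "u < v"
    and btw: "\<forall>w\<in>X ` {1..L}. \<not> (u < w \<and> w < v)" using cs by (auto simp: consec_def)
  obtain i where i: "1 \<le> i" "i \<le> L" "plt_x X L i = u" using px_ex[OF inj uv(1)] by blast
  obtain m where m: "1 \<le> m" "m \<le> L" "plt_x X L m = v" using px_ex[OF inj uv(2)] by blast
  have "i < m" using px_le[OF inj, of m i] i m uv(3) by (metis not_le)
  have "m = Suc i"
  proof (rule ccontr)
    assume "m \<noteq> Suc i"
    hence "Suc i < m" using \<open>i < m\<close> by simp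
    hence "u < plt_x X L (Suc i)" "plt_x X L (Suc i) < v"
      using px_lt[OF inj, of i "Suc i"] px_lt[OF inj, of "Suc i" m] i m by auto
    moreover have "plt_x X L (Suc i) \<in> X ` {1..L}" using px_in[OF inj] \<open>Suc i < m\<close> m by auto
    ultimately show False using btw by blast
  qed
  thus ?thesis using i m by (intro bexI[of _ m]) auto
qed

lemma px_the:
  assumes inj: "inj_on X {1..L}" and j: "j \<in> {2..L}"
  shows "(THE j'. j' \<in> {2..L} \<and> plt_x X L j' = plt_x X L j) = j"
  using j by (intro the_equality) (auto intro: px_inj[OF inj])

lemma R_alg:
  fixes m c zj zi dd mu \<xi> M r :: real
  assumes c: "c = \<bar>zj - zi\<bar>" and dd: "0 < dd" and mu: "\<xi> \<le> mu" "\<xi> > 0" "c \<le> mu * dd" "mu \<le> M"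
    and r: "r > 1" and m: "m = r * mu * dd"
  shows "(r - 1) * \<xi> * dd - 2 * min zj zi \<le> m + (zj - zi)\<^sup>2 / m - (zj + zi)"
    and "m + (zj - zi)\<^sup>2 / m - (zj + zi) \<le> r * M * dd - 2 * min zj zi"
proof -
  have mupos: "mu > 0" using mu by simp
  have mdd: "mu * dd > 0" using mupos dd by simp
  have m0: "m > 0" using m r mdd by (simp add: mult.assoc)
  have "mu * dd \<le> r * (mu * dd)" using mult_right_mono[of 1 r "mu * dd"] r mdd by simp
  hence cm: "c \<le> m" using mu(3) m by (simp add: mult.assoc)
  have c0: "c \<ge> 0" using c by simp
  have sq: "(zj - zi)\<^sup>2 = c * c" using c by (simp add: power2_eq_square abs_mult_self_eq)
  have h1: "c * c / m \<le> c"
  proof -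
    have "c * c \<le> c * m" using cm c0 by (intro mult_left_mono) auto
    thus ?thesis using m0 by (simp add: divide_le_eq)
  qed
  have h2: "c * c / m \<ge> 0" using m0 c0 by simp
  have zz: "zj + zi = 2 * min zj zi + c" using c by (auto simp: min_def abs_if)
  have "(r - 1) * \<xi> * dd \<le> (r - 1) * mu * dd" using r mu dd by (intro mult_right_mono mult_left_mono) auto
  also have "\<dots> = m - mu * dd" using m by (simp add: algebra_simps)
  also have "\<dots> \<le> m - c" using mu(3) by simp
  finally have lo: "(r - 1) * \<xi> * dd \<le> m - c" .
  have "r * mu \<le> r * M" using r mu by simp
  hence "m \<le> r * M * dd" using m dd by (simp add: mult_right_mono)
  show "(r - 1) * \<xi> * dd - 2 * min zj zi \<le> m + (zj - zi)\<^sup>2 / m - (zj + zi)"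
    using lo h2 zz sq by simp
  show "m + (zj - zi)\<^sup>2 / m - (zj + zi) \<le> r * M * dd - 2 * min zj zi"
    using \<open>m \<le> _\<close> h1 zz sq by simp
qed

lemma new_alg:
  fixes a b c mu dd r s y :: real
  assumes ab: "a < b" and dd: "dd = (b - a) powr (1 / real N)" and N: "N \<ge> 1"
    and mu: "mu > 0" and c: "0 \<le> c" "c \<le> mu * dd" and r: "r > 1" and s: "\<bar>s\<bar> \<le> 1"
    and y: "y = (a + b) / 2 - (1 / (2 * r)) * (c / mu) ^ N * s"
  shows "a + (1 - 1 / r) / 2 * (b - a) \<le> y" "y \<le> b - (1 - 1 / r) / 2 * (b - a)"
proof -
  have "c / mu \<le> dd" using c mu by (simp add: divide_le_eq mult.commute)
  hence "(c / mu) ^ N \<le> dd ^ N" using c mu by (intro power_mono) auto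
  also have "dd ^ N = b - a" using dd pw_pow[OF N, of "b - a"] ab by simp
  finally have cN: "(c / mu) ^ N \<le> b - a" .
  have cN0: "(c / mu) ^ N \<ge> 0" using c mu by simp
  define oo where "oo = (1 / (2 * r)) * (c / mu) ^ N * s"
  have "\<bar>oo\<bar> = (1 / (2 * r)) * (c / mu) ^ N * \<bar>s\<bar>" using r cN0 by (simp add: oo_def abs_mult)
  also have "\<dots> \<le> (1 / (2 * r)) * (c / mu) ^ N * 1" using r cN0 s by (intro mult_left_mono) auto
  also have "\<dots> \<le> (1 / (2 * r)) * (b - a)" using mult_left_mono[OF cN, of "1 / (2 * r)"] r by simp
  finally have oo: "\<bar>oo\<bar> \<le> (b - a) / (2 * r)" by simp
  have e: "(1 - 1 / r) / 2 * (b - a) = (b - a) / 2 - (b - a) / (2 * r)" using r by (simp add: field_simps)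
  have yo: "y = (a + b) / 2 - oo" using y by (simp add: oo_def)
  show "a + (1 - 1 / r) / 2 * (b - a) \<le> y" using oo e yo by (simp add: abs_le_iff field_simps)
  show "y \<le> b - (1 - 1 / r) / 2 * (b - a)" using oo e yo by (simp add: abs_le_iff field_simps)
qed

lemma mu_props:
  fixes f :: "real \<Rightarrow> real"
  assumes N: "N \<ge> 1" and H: "H > 0" and xi: "\<xi> > 0"
    and holder: "\<forall>x\<in>{0..1}. \<forall>y\<in>{0..1}. \<bar>f x - f y\<bar> \<le> H * \<bar>x - y\<bar> powr (1 / real N)"
    and ord: "\<forall>i\<in>{2..L}. plt_x X L (i - 1) < plt_x X L i"
    and rng: "\<forall>i\<in>{1..L}. plt_x X L i \<in> {0..1}"
    and j: "j \<in> {2..L}"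
  shows "\<xi> \<le> plt_mu f N \<xi> X L j" "plt_slope f N X L j \<le> plt_mu f N \<xi> X L j"
    "plt_mu f N \<xi> X L j \<le> max H \<xi>" "plt_d N X L j > 0"
proof -
  have dpos: "plt_d N X L i > 0" if i: "i \<in> {2..L}" for i
  proof -
    have "plt_x X L (i - 1) < plt_x X L i" using ord i by blast
    thus ?thesis by (simp add: plt_d_def)
  qed
  have slope_le: "plt_slope f N X L i \<le> H" if i: "i \<in> {2..L}" for i
  proof -
    have "i - 1 \<in> {1..L}" "i \<in> {1..L}" using i by auto
    hence "plt_x X L i \<in> {0..1}" "plt_x X L (i - 1) \<in> {0..1}" using rng by blast+
    hence "\<bar>f (plt_x X L i) - f (plt_x X L (i - 1))\<bar> \<le> H * \<bar>plt_x X L i - plt_x X L (i - 1)\<bar> powr (1 / real N)"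
      using holder by blast
    also have "plt_x X L (i - 1) < plt_x X L i" using ord i by blast
    hence "\<bar>plt_x X L i - plt_x X L (i - 1)\<bar> = plt_x X L i - plt_x X L (i - 1)" by simp
    finally have "\<bar>plt_z f X L i - plt_z f X L (i - 1)\<bar> \<le> H * plt_d N X L i"
      by (simp add: plt_z_def plt_d_def)
    thus ?thesis using dpos[OF i] by (simp add: plt_slope_def divide_le_eq mult.commute)
  qed
  have slope_ge: "plt_slope f N X L i \<ge> 0" if i: "i \<in> {2..L}" for i
    using dpos[OF i] by (simp add: plt_slope_def)
  define Aj where "Aj = {j - 1..j + 1} \<inter> {2..L}"
  have Aj: "finite Aj" "j \<in> Aj" "Aj \<subseteq> {2..L}" using j by (auto simp: Aj_def)
  have lam1: "plt_slope f N X L j \<le> plt_lambda f N X L j"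
    unfolding plt_lambda_def Aj_def[symmetric] using Aj by (intro Max_ge) auto
  have lam2: "plt_lambda f N X L j \<le> H"
    unfolding plt_lambda_def Aj_def[symmetric] using Aj slope_le by (subst Max_le_iff) auto
  have mg1: "plt_slope f N X L j \<le> plt_mu_glob f N X L"
    unfolding plt_mu_glob_def using j by (intro Max_ge) auto
  have mg2: "plt_mu_glob f N X L \<le> H"
    unfolding plt_mu_glob_def using j slope_le by (subst Max_le_iff) auto
  have mg0: "plt_mu_glob f N X L \<ge> 0" using mg1 slope_ge[OF j] by linarith
  have xm: "plt_x X L j - plt_x X L (j - 1) \<le> plt_Xmax X L"
    unfolding plt_Xmax_def using j by (intro Max_ge) auto
  have "plt_x X L (j - 1) < plt_x X L j" using ord j by blast
  hence dj0: "plt_x X L j - plt_x X L (j - 1) > 0" by simp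
  have dle: "plt_d N X L j \<le> plt_Xmax X L powr (1 / real N)"
    unfolding plt_d_def using xm dj0 by (intro pw_mono) auto
  have xp: "plt_Xmax X L powr (1 / real N) > 0" using xm dj0 by simp
  have "plt_mu_glob f N X L * plt_d N X L j \<le> plt_mu_glob f N X L * plt_Xmax X L powr (1 / real N)"
    using dle mg0 by (intro mult_left_mono) auto
  hence g1: "plt_gamma f N X L j \<le> plt_mu_glob f N X L"
    using xp by (simp add: plt_gamma_def divide_le_eq)
  show "\<xi> \<le> plt_mu f N \<xi> X L j" by (simp add: plt_mu_def)
  show "plt_slope f N X L j \<le> plt_mu f N \<xi> X L j" using lam1 by (simp add: plt_mu_def)
  show "plt_mu f N \<xi> X L j \<le> max H \<xi>" using lam2 g1 mg2 by (auto simp: plt_mu_def le_max_iff_disj)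
  show "plt_d N X L j > 0" using dpos[OF j] .
qed

lemma R_idx:
  fixes f :: "real \<Rightarrow> real"
  assumes N: "N \<ge> 1" and H: "H > 0" and xi: "\<xi> > 0" and r: "r > 1"
    and holder: "\<forall>x\<in>{0..1}. \<forall>y\<in>{0..1}. \<bar>f x - f y\<bar> \<le> H * \<bar>x - y\<bar> powr (1 / real N)"
    and ord: "\<forall>i\<in>{2..L}. plt_x X L (i - 1) < plt_x X L i"
    and rng: "\<forall>i\<in>{1..L}. plt_x X L i \<in> {0..1}"
    and j: "j \<in> {2..L}"
  shows "(r - 1) * \<xi> * plt_d N X L j - 2 * min (f (plt_x X L j)) (f (plt_x X L (j - 1)))
           \<le> plt_R f N r \<xi> X L j"
    "plt_R f N r \<xi> X L j
           \<le> r * max H \<xi> * plt_d N X L j - 2 * min (f (plt_x X L j)) (f (plt_x X L (j - 1)))"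
proof -
  note mp = mu_props[OF N H xi holder ord rng j]
  define c where "c = \<bar>plt_z f X L j - plt_z f X L (j - 1)\<bar>"
  have "c / plt_d N X L j \<le> plt_mu f N \<xi> X L j" using mp(2) by (simp add: plt_slope_def c_def)
  hence cle: "c \<le> plt_mu f N \<xi> X L j * plt_d N X L j" using mp(4) by (simp add: divide_le_eq)
  note RA = R_alg[OF c_def mp(4) mp(1) xi cle mp(3) r refl]
  show "(r - 1) * \<xi> * plt_d N X L j - 2 * min (f (plt_x X L j)) (f (plt_x X L (j - 1)))
           \<le> plt_R f N r \<xi> X L j"
    using RA(1) by (simp add: plt_R_def Let_def plt_z_def)
  show "plt_R f N r \<xi> X L j
           \<le> r * max H \<xi> * plt_d N X L j - 2 * min (f (plt_x X L j)) (f (plt_x X L (j - 1)))"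
    using RA(2) by (simp add: plt_R_def Let_def plt_z_def)
qed

lemma new_idx:
  fixes f :: "real \<Rightarrow> real"
  assumes N: "N \<ge> 1" and H: "H > 0" and xi: "\<xi> > 0" and r: "r > 1"
    and holder: "\<forall>x\<in>{0..1}. \<forall>y\<in>{0..1}. \<bar>f x - f y\<bar> \<le> H * \<bar>x - y\<bar> powr (1 / real N)"
    and ord: "\<forall>i\<in>{2..L}. plt_x X L (i - 1) < plt_x X L i"
    and rng: "\<forall>i\<in>{1..L}. plt_x X L i \<in> {0..1}"
    and j: "j \<in> {2..L}"
  shows "plt_x X L (j - 1) + (1 - 1 / r) / 2 * (plt_x X L j - plt_x X L (j - 1)) \<le> plt_new f N r \<xi> X L j"
    "plt_new f N r \<xi> X L j \<le> plt_x X L j - (1 - 1 / r) / 2 * (plt_x X L j - plt_x X L (j - 1))"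
proof -
  note mp = mu_props[OF N H xi holder ord rng j]
  define c where "c = \<bar>plt_z f X L j - plt_z f X L (j - 1)\<bar>"
  have "c / plt_d N X L j \<le> plt_mu f N \<xi> X L j" using mp(2) by (simp add: plt_slope_def c_def)
  hence cle: "c \<le> plt_mu f N \<xi> X L j * plt_d N X L j" using mp(4) by (simp add: divide_le_eq)
  have ab: "plt_x X L (j - 1) < plt_x X L j" using ord j by blast
  have mu0: "plt_mu f N \<xi> X L j > 0" using mp(1) xi by linarith
  have s: "\<bar>sgn (plt_z f X L j - plt_z f X L (j - 1))\<bar> \<le> 1" by (simp add: sgn_if)
  note NA = new_alg[OF ab plt_d_def[of N X L j, unfolded plt_x_def[symmetric]] N mu0 _ cle r s]
  show "plt_x X L (j - 1) + (1 - 1 / r) / 2 * (plt_x X L j - plt_x X L (j - 1)) \<le> plt_new f N r \<xi> X L j"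
    using NA(1)[OF _ refl] by (simp add: plt_new_def c_def)
  show "plt_new f N r \<xi> X L j \<le> plt_x X L j - (1 - 1 / r) / 2 * (plt_x X L j - plt_x X L (j - 1))"
    using NA(2)[OF _ refl] by (simp add: plt_new_def c_def)
qed




locale plt_conc =
  fixes f :: "real \<Rightarrow> real" and N :: nat and H r \<xi> :: real and X :: "nat \<Rightarrow> real"
    and q p :: "nat \<Rightarrow> nat"
  assumes N: "N \<ge> 1" and H: "H > 0" and r: "r > 1" and xi: "\<xi> > 0"
    and holder: "\<forall>x\<in>{0..1}. \<forall>y\<in>{0..1}. \<bar>f x - f y\<bar> \<le> H * \<bar>x - y\<bar> powr (1 / real N)"
    and run: "PLT_run f N r \<xi> X q p"
begin

definition ok :: "nat \<Rightarrow> (nat \<Rightarrow> nat) \<Rightarrow> bool" where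
  "ok l t \<longleftrightarrow> inj_on t {1..p (l + 1)} \<and> t ` {1..p (l + 1)} \<subseteq> {2..q l} \<and>
           (\<forall>k\<in>{1..p (l + 1)}. \<forall>k'\<in>{1..p (l + 1)}. k < k' \<longrightarrow>
               plt_R f N r \<xi> X (q l) (t k') \<le> plt_R f N r \<xi> X (q l) (t k)) \<and>
           (\<forall>k\<in>{1..p (l + 1)}. \<forall>j\<in>{2..q l} - t ` {1..p (l + 1)}.
               plt_R f N r \<xi> X (q l) j \<le> plt_R f N r \<xi> X (q l) (t k)) \<and>
           (\<forall>k\<in>{1..p (l + 1)}. X (q l + k) = plt_new f N r \<xi> X (q l) (t k))"

lemma run_base: "q 1 > 1" "X 1 = 0" "X 2 = 1" "\<forall>i\<in>{3..q 1}. 0 < X i \<and> X i < 1" "inj_on X {1..q 1}"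
  using run by (simp_all add: PLT_run_def)

lemma step: "l \<ge> 1 \<Longrightarrow> 1 \<le> p (l + 1) \<and> p (l + 1) \<le> q l - 1 \<and> q (l + 1) = q l + p (l + 1) \<and> (\<exists>t. ok l t)"
  using run unfolding PLT_run_def ok_def by blast

definition T where "T l = (SOME t. ok l t)"

lemma T_ok: "l \<ge> 1 \<Longrightarrow> ok l (T l)"
  unfolding T_def using step by (metis someI_ex)

lemma q_Suc: "l \<ge> 1 \<Longrightarrow> q (Suc l) = q l + p (Suc l)" and p_pos: "l \<ge> 1 \<Longrightarrow> p (Suc l) \<ge> 1"
  using step by auto

lemma q_ge: "l \<ge> 1 \<Longrightarrow> q l \<ge> l + 1"
proof (induction l rule: nat_induct_at_least)
  case base thus ?case using run_base(1) by simp
next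
  case (Suc n) thus ?case using q_Suc[of n] p_pos[of n] by simp
qed

lemma q_mono: assumes "1 \<le> l" "l \<le> l'" shows "q l \<le> q l'"
  using assms(2)
proof (induction l' rule: nat_induct_at_least)
  case base thus ?case by simp
next
  case (Suc n) thus ?case using q_Suc[of n] assms(1) by simp
qed

lemma inv: "l \<ge> 1 \<Longrightarrow> inj_on X {1..q l} \<and> X ` {1..q l} \<subseteq> {0..1}"
proof (induction l rule: nat_induct_at_least)
  case base
  have "X i \<in> {0..1}" if "i \<in> {1..q 1}" for i
  proof -
    have "i = 1 \<or> i = 2 \<or> i \<in> {3..q 1}" using that by auto
    thus ?thesis using run_base(2,3,4) by fastforce
  qed
  thus ?case using run_base(5) by auto
next
  case (Suc l)
  define L where "L = q l"
  define P where "P = p (Suc l)"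
  define t where "t = T l"
  have inj: "inj_on X {1..L}" and rg: "X ` {1..L} \<subseteq> {0..1}" using Suc by (auto simp: L_def)
  have okt: "ok l t" using T_ok Suc by (simp add: t_def)
  hence tinj: "inj_on t {1..P}" and trg: "t ` {1..P} \<subseteq> {2..L}"
    and tnew: "\<forall>k\<in>{1..P}. X (L + k) = plt_new f N r \<xi> X L (t k)"
    by (auto simp: ok_def L_def P_def)
  have ord: "\<forall>i\<in>{2..L}. plt_x X L (i - 1) < plt_x X L i" using px_lt[OF inj] by auto
  have rng: "\<forall>i\<in>{1..L}. plt_x X L i \<in> {0..1}"
  proof
    fix i assume "i \<in> {1..L}"
    hence "plt_x X L i \<in> X ` {1..L}" using px_in[OF inj] by auto
    thus "plt_x X L i \<in> {0..1}" using rg by blast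
  qed
  have kap: "(1 - 1 / r) / 2 > 0" using r by (simp add: field_simps)
  have newpos: "plt_x X L (t k - 1) < X (L + k) \<and> X (L + k) < plt_x X L (t k)" if k: "k \<in> {1..P}" for k
  proof -
    have j: "t k \<in> {2..L}" using trg k by blast
    note NI = new_idx[OF N H xi r holder ord rng j]
    have "plt_x X L (t k - 1) < plt_x X L (t k)" using ord j by blast
    hence "(1 - 1 / r) / 2 * (plt_x X L (t k) - plt_x X L (t k - 1)) > 0" using kap by simp
    moreover have "X (L + k) = plt_new f N r \<xi> X L (t k)" using tnew k by blast
    ultimately show ?thesis using NI by linarith
  qed
  have notin: "X (L + k) \<notin> X ` {1..L}" if k: "k \<in> {1..P}" for k
  proof
    assume "X (L + k) \<in> X ` {1..L}"
    moreover have "t k \<in> {2..L}" using trg k by blast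
    hence "consec (X ` {1..L}) (plt_x X L (t k - 1)) (plt_x X L (t k))" using px_consec[OF inj] by auto
    ultimately show False using newpos[OF k] by (auto simp: consec_def)
  qed
  have dist: "k1 = k2" if k: "k1 \<in> {1..P}" "k2 \<in> {1..P}" "X (L + k1) = X (L + k2)" for k1 k2
  proof -
    have lt: False if a: "a \<in> {1..P}" "b \<in> {1..P}" "t a < t b" "X (L + a) = X (L + b)" for a b
    proof -
      have "t a \<in> {2..L}" "t b \<in> {2..L}" using trg a(1,2) by blast+
      hence "plt_x X L (t a) \<le> plt_x X L (t b - 1)" using a(3) by (intro px_le[OF inj]) auto
      thus False using newpos[OF a(1)] newpos[OF a(2)] a(4) by auto
    qed
    have "t k1 = t k2" using lt[of k1 k2] lt[of k2 k1] k by (metis nat_neq_iff)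
    thus ?thesis using tinj k by (auto dest: inj_onD)
  qed
  have qS: "q (Suc l) = L + P" using q_Suc[OF Suc.hyps] by (simp add: L_def P_def)
  have U: "{1..q (Suc l)} = {1..L} \<union> {L + 1..L + P}" using qS by auto
  have "inj_on X {1..q (Suc l)}"
    unfolding inj_on_def
  proof (intro ballI impI)
    fix a b assume a: "a \<in> {1..q (Suc l)}" and b: "b \<in> {1..q (Suc l)}" and e: "X a = X b"
    show "a = b"
    proof (cases "a \<le> L"; cases "b \<le> L")
      assume "a \<le> L" "b \<le> L" thus ?thesis using inj a b e by (auto dest: inj_onD)
    next
      assume "a \<le> L" "\<not> b \<le> L"
      hence "b - L \<in> {1..P}" "L + (b - L) = b" using b qS by auto
      hence "X b \<notin> X ` {1..L}" using notin[of "b - L"] by simp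
      moreover have "X a \<in> X ` {1..L}" using a \<open>a \<le> L\<close> by auto
      ultimately show ?thesis using e by simp
    next
      assume "\<not> a \<le> L" "b \<le> L"
      hence "a - L \<in> {1..P}" "L + (a - L) = a" using a qS by auto
      hence "X a \<notin> X ` {1..L}" using notin[of "a - L"] by simp
      moreover have "X b \<in> X ` {1..L}" using b \<open>b \<le> L\<close> by auto
      ultimately show ?thesis using e by simp
    next
      assume "\<not> a \<le> L" "\<not> b \<le> L"
      hence "a - L \<in> {1..P}" "b - L \<in> {1..P}" "L + (a - L) = a" "L + (b - L) = b" using a b qS by auto
      note kk = this
      have "X (L + (a - L)) = X (L + (b - L))" unfolding kk(3,4) by (rule e)
      hence "a - L = b - L" by (rule dist[OF kk(1,2)])
      thus ?thesis using \<open>\<not> a \<le> L\<close> \<open>\<not> b \<le> L\<close> by arith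
    qed
  qed
  moreover have "X ` {1..q (Suc l)} \<subseteq> {0..1}"
  proof
    fix y assume "y \<in> X ` {1..q (Suc l)}"
    then obtain i where i: "i \<in> {1..q (Suc l)}" "y = X i" by auto
    show "y \<in> {0..1}"
    proof (cases "i \<le> L")
      case True
      hence "i \<in> {1..L}" using i(1) by auto
      hence "X i \<in> X ` {1..L}" by blast
      thus ?thesis using rg i(2) by blast
    next
      case False
      hence k: "i - L \<in> {1..P}" "L + (i - L) = i" using i qS by auto
      have "t (i - L) \<in> {2..L}" using trg k by blast
      hence "t (i - L) - 1 \<in> {1..L}" "t (i - L) \<in> {1..L}" by auto
      hence "plt_x X L (t (i - L) - 1) \<in> {0..1}" "plt_x X L (t (i - L)) \<in> {0..1}" using rng by blast+
      moreover have "plt_x X L (t (i - L) - 1) < X i" "X i < plt_x X L (t (i - L))"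
        using newpos[OF k(1)] unfolding k(2) by auto
      ultimately show ?thesis using i(2) by auto
    qed
  qed
  ultimately show ?case by simp
qed

definition Sa where "Sa m = X ` {1..q (Suc m)}"
definition Ca where "Ca m = (\<lambda>k. (plt_x X (q (Suc m)) (T (Suc m) k - 1), plt_x X (q (Suc m)) (T (Suc m) k)))
   ` {1..p (Suc (Suc m))}"
definition \<rho>a where "\<rho>a m u v = plt_R f N r \<xi> X (q (Suc m))
   (THE j. j \<in> {2..q (Suc m)} \<and> plt_x X (q (Suc m)) j = v)"

lemma facts_m:
  fixes m
  defines "L \<equiv> q (Suc m)" and "P \<equiv> p (Suc (Suc m))" and "t \<equiv> T (Suc m)"
  shows "inj_on X {1..L}" "X ` {1..L} \<subseteq> {0..1}" "L \<ge> 2"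
    "\<forall>i\<in>{2..L}. plt_x X L (i - 1) < plt_x X L i"
    "\<forall>i\<in>{1..L}. plt_x X L i \<in> {0..1}"
    "t ` {1..P} \<subseteq> {2..L}" "inj_on t {1..P}"
    "\<forall>k\<in>{1..P}. \<forall>j\<in>{2..L} - t ` {1..P}. plt_R f N r \<xi> X L j \<le> plt_R f N r \<xi> X L (t k)"
    "\<forall>k\<in>{1..P}. X (L + k) = plt_new f N r \<xi> X L (t k)"
    "q (Suc (Suc m)) = L + P"
proof -
  show inj: "inj_on X {1..L}" and rg: "X ` {1..L} \<subseteq> {0..1}" using inv[of "Suc m"] by (auto simp: L_def)
  show "L \<ge> 2" using q_ge[of "Suc m"] by (simp add: L_def)
  show "\<forall>i\<in>{2..L}. plt_x X L (i - 1) < plt_x X L i" using px_lt[OF inj] by auto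
  show "\<forall>i\<in>{1..L}. plt_x X L i \<in> {0..1}"
  proof
    fix i assume "i \<in> {1..L}"
    hence "plt_x X L i \<in> X ` {1..L}" using px_in[OF inj] by auto
    thus "plt_x X L i \<in> {0..1}" using rg by blast
  qed
  have okt: "ok (Suc m) t" using T_ok[of "Suc m"] by (simp add: t_def)
  thus "t ` {1..P} \<subseteq> {2..L}" "inj_on t {1..P}"
    "\<forall>k\<in>{1..P}. \<forall>j\<in>{2..L} - t ` {1..P}. plt_R f N r \<xi> X L j \<le> plt_R f N r \<xi> X L (t k)"
    "\<forall>k\<in>{1..P}. X (L + k) = plt_new f N r \<xi> X L (t k)"
    by (auto simp: ok_def L_def P_def)
  show "q (Suc (Suc m)) = L + P" using q_Suc[of "Suc m"] by (simp add: L_def P_def)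
qed

lemma rho_idx:
  assumes "j \<in> {2..q (Suc m)}"
  shows "\<rho>a m (plt_x X (q (Suc m)) (j - 1)) (plt_x X (q (Suc m)) j) = plt_R f N r \<xi> X (q (Suc m)) j"
  unfolding \<rho>a_def using px_the[OF facts_m(1) assms] by simp

lemma abs_inst:
  assumes pQ: "\<forall>l>1. p l \<le> Q"
  shows "plt_abs Sa Ca \<rho>a f N H ((1 - 1 / r) / 2) ((r - 1) * \<xi>) (r * max H \<xi>) Q"
proof
  show "N \<ge> 1" "H > 0" by (rule N, rule H)
  show "0 < (1 - 1 / r) / 2" "(1 - 1 / r) / 2 < 1" using r by (simp_all add: field_simps)
  show "(r - 1) * \<xi> > 0" using r xi by simp
  show "r * max H \<xi> \<ge> 0" using r H by simp
  show "\<forall>x\<in>{0..1}. \<forall>y\<in>{0..1}. \<bar>f x - f y\<bar> \<le> H * \<bar>x - y\<bar> powr (1 / real N)" by (rule holder)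
  fix l
  note F = facts_m[of l]
  show "finite (Sa l)" by (simp add: Sa_def)
  show "Sa l \<subseteq> {0..1}" using F(2) by (simp add: Sa_def)
  show "0 \<in> Sa l" using F(3) run_base(2) unfolding Sa_def by (metis atLeastAtMost_iff image_eqI le_numeral_extra(4) one_le_numeral order_trans)
  show "1 \<in> Sa l" using F(3) run_base(3) unfolding Sa_def by (metis atLeastAtMost_iff image_eqI one_le_numeral)
  show "Sa l \<subseteq> Sa (Suc l)" unfolding Sa_def using q_mono[of "Suc l" "Suc (Suc l)"] by auto
  show "card (Ca l) \<le> Q"
  proof -
    have "card (Ca l) \<le> card {1..p (Suc (Suc l))}" unfolding Ca_def by (rule card_image_le) simp
    also have "\<dots> \<le> Q" using pQ by simp
    finally show ?thesis .
  qed
next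
  fix u v l assume "(u, v) \<in> Ca l"
  note F = facts_m[of l]
  then obtain k where k: "k \<in> {1..p (Suc (Suc l))}" "u = plt_x X (q (Suc l)) (T (Suc l) k - 1)"
    "v = plt_x X (q (Suc l)) (T (Suc l) k)" using \<open>(u, v) \<in> Ca l\<close> by (auto simp: Ca_def)
  have j: "T (Suc l) k \<in> {2..q (Suc l)}" using F(6) k(1) by blast
  show "consec (Sa l) u v" unfolding Sa_def k(2,3) using px_consec[OF F(1)] j by auto
next
  fix l u v assume cs: "consec (Sa l) u v"
  note F = facts_m[of l]
  obtain j where j: "j \<in> {2..q (Suc l)}" "u = plt_x X (q (Suc l)) (j - 1)" "v = plt_x X (q (Suc l)) j"
    using px_consec_ex[OF F(1)] cs unfolding Sa_def by blast
  note RI = R_idx[OF N H xi r holder F(4,5) j(1)]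
  have d: "plt_d N X (q (Suc l)) j = (v - u) powr (1 / real N)" using j by (simp add: plt_d_def)
  have rr: "\<rho>a l u v = plt_R f N r \<xi> X (q (Suc l)) j" using rho_idx[OF j(1)] j by simp
  show "(r - 1) * \<xi> * (v - u) powr (1 / real N) - 2 * min (f u) (f v) \<le> \<rho>a l u v"
    using RI(1) unfolding rr d j(2,3)[symmetric] by (simp add: min.commute)
  show "\<rho>a l u v \<le> r * max H \<xi> * (v - u) powr (1 / real N) - 2 * min (f u) (f v)"
    using RI(2) unfolding rr d j(2,3)[symmetric] by (simp add: min.commute)
next
  fix u v l a b assume uv: "(u, v) \<in> Ca l" and cs: "consec (Sa l) a b" and nab: "(a, b) \<notin> Ca l"
  note F = facts_m[of l]
  obtain k where k: "k \<in> {1..p (Suc (Suc l))}" "u = plt_x X (q (Suc l)) (T (Suc l) k - 1)"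
    "v = plt_x X (q (Suc l)) (T (Suc l) k)" using uv by (auto simp: Ca_def)
  have jk: "T (Suc l) k \<in> {2..q (Suc l)}" using F(6) k(1) by blast
  obtain j where j: "j \<in> {2..q (Suc l)}" "a = plt_x X (q (Suc l)) (j - 1)" "b = plt_x X (q (Suc l)) j"
    using px_consec_ex[OF F(1)] cs unfolding Sa_def by blast
  have "j \<notin> T (Suc l) ` {1..p (Suc (Suc l))}"
  proof
    assume "j \<in> T (Suc l) ` {1..p (Suc (Suc l))}"
    then obtain k' where "k' \<in> {1..p (Suc (Suc l))}" "j = T (Suc l) k'" by blast
    hence "(a, b) \<in> Ca l" unfolding Ca_def j(2,3) by blast
    thus False using nab by simp
  qed
  hence "plt_R f N r \<xi> X (q (Suc l)) j \<le> plt_R f N r \<xi> X (q (Suc l)) (T (Suc l) k)"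
    using F(8) k(1) j(1) by blast
  thus "\<rho>a l a b \<le> \<rho>a l u v" using rho_idx[OF j(1)] rho_idx[OF jk] j k by simp
next
  fix u v l assume uv: "(u, v) \<in> Ca l"
  note F = facts_m[of l]
  obtain k where k: "k \<in> {1..p (Suc (Suc l))}" "u = plt_x X (q (Suc l)) (T (Suc l) k - 1)"
    "v = plt_x X (q (Suc l)) (T (Suc l) k)" using uv by (auto simp: Ca_def)
  have jk: "T (Suc l) k \<in> {2..q (Suc l)}" using F(6) k(1) by blast
  note NI = new_idx[OF N H xi r holder F(4,5) jk]
  have xk: "X (q (Suc l) + k) = plt_new f N r \<xi> X (q (Suc l)) (T (Suc l) k)" using F(9) k(1) by blast
  have "X (q (Suc l) + k) \<in> Sa (Suc l)" unfolding Sa_def using F(10) k(1) by auto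
  thus "\<exists>y\<in>Sa (Suc l). u + (1 - 1 / r) / 2 * (v - u) \<le> y \<and> y \<le> v - (1 - 1 / r) / 2 * (v - u)"
    using NI xk k(2,3) by (intro bexI[of _ "X (q (Suc l) + k)"]) auto
next
  fix y l assume y1: "y \<in> Sa (Suc l)" and y2: "y \<notin> Sa l"
  note F = facts_m[of l]
  obtain i where i: "i \<in> {1..q (Suc (Suc l))}" "y = X i" using y1 by (auto simp: Sa_def)
  have "i > q (Suc l)" using i y2 by (force simp: Sa_def)
  hence k: "i - q (Suc l) \<in> {1..p (Suc (Suc l))}" "q (Suc l) + (i - q (Suc l)) = i" using i F(10) by auto
  define k where "k = i - q (Suc l)"
  have jk: "T (Suc l) k \<in> {2..q (Suc l)}" using F(6) k(1) unfolding k_def by blast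
  note NI = new_idx[OF N H xi r holder F(4,5) jk]
  have xk: "X i = plt_new f N r \<xi> X (q (Suc l)) (T (Suc l) k)" using F(9) k by (force simp: k_def)
  have "(plt_x X (q (Suc l)) (T (Suc l) k - 1), plt_x X (q (Suc l)) (T (Suc l) k)) \<in> Ca l"
    unfolding Ca_def using k(1) by (auto simp: k_def)
  thus "\<exists>(u, v)\<in>Ca l. u + (1 - 1 / r) / 2 * (v - u) \<le> y \<and> y \<le> v - (1 - 1 / r) / 2 * (v - u)"
    using NI xk i(2) by (intro bexI) auto
qed

end



context plt_conc
begin

lemma U_eq: "(\<Union>l. Sa l) = X ` {k. k \<ge> 1}"
proof
  show "(\<Union>l. Sa l) \<subseteq> X ` {k. k \<ge> 1}" by (auto simp: Sa_def)
  show "X ` {k. k \<ge> 1} \<subseteq> (\<Union>l. Sa l)"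
  proof
    fix y assume "y \<in> X ` {k. k \<ge> 1}"
    then obtain k where k: "k \<ge> 1" "y = X k" by auto
    have "q (Suc k) \<ge> k" using q_ge[of "Suc k"] by simp
    hence "y \<in> Sa k" using k by (auto simp: Sa_def)
    thus "y \<in> (\<Union>l. Sa l)" by blast
  qed
qed

lemma X_in_Sa: "k \<ge> 1 \<Longrightarrow> X k \<in> Sa k"
  using q_ge[of "Suc k"] by (auto simp: Sa_def)

lemma injX: "inj_on X {k. k \<ge> 1}"
proof (rule inj_onI)
  fix a b assume a: "a \<in> {k. k \<ge> 1}" and b: "b \<in> {k. k \<ge> 1}" and e: "X a = X b"
  define L where "L = q (Suc (max a b))"
  have "L \<ge> Suc (Suc (max a b))" using q_ge[of "Suc (max a b)"] by (simp add: L_def)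
  moreover have "a \<le> max a b" "b \<le> max a b" by auto
  ultimately have "L \<ge> a" "L \<ge> b" by linarith+
  hence "a \<in> {1..L}" "b \<in> {1..L}" using a b by auto
  moreover have "inj_on X {1..L}" using inv[of "Suc (max a b)"] by (simp add: L_def)
  ultimately show "a = b" using e by (auto dest: inj_onD)
qed

lemma X01: "k \<ge> 1 \<Longrightarrow> X k \<in> {0..1}"
proof -
  assume "k \<ge> 1"
  hence "X k \<in> Sa k" by (rule X_in_Sa)
  thus ?thesis using facts_m(2)[of k] unfolding Sa_def by blast
qed

lemma lp_of:
  assumes "seq_limit_point X x"
  shows "limpt Sa x"
  unfolding limpt_def
proof (intro allI impI)
  fix \<epsilon> :: real assume e: "\<epsilon> > 0"
  obtain \<sigma> where \<sigma>: "strict_mono \<sigma>" "\<forall>n. \<sigma> n \<ge> 1" "(\<lambda>n. X (\<sigma> n)) \<longlonglongrightarrow> x"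
    using assms by (auto simp: seq_limit_point_def)
  obtain n0 where n0: "\<forall>n\<ge>n0. norm (X (\<sigma> n) - x) < \<epsilon>" using \<sigma>(3) e unfolding LIMSEQ_iff by blast
  have sub: "(\<lambda>n. X (\<sigma> n)) ` {n0..} \<subseteq> {y \<in> (\<Union>l. Sa l). \<bar>y - x\<bar> < \<epsilon>}"
    using n0 \<sigma>(2) U_eq by auto
  have "inj_on (\<lambda>n. X (\<sigma> n)) {n0..}"
  proof (rule inj_onI)
    fix a b assume "a \<in> {n0..}" "b \<in> {n0..}" "X (\<sigma> a) = X (\<sigma> b)"
    hence "\<sigma> a = \<sigma> b" using injX \<sigma>(2) by (auto dest: inj_onD)
    thus "a = b" using strict_mono_eq[OF \<sigma>(1)] by simp
  qed
  hence "infinite ((\<lambda>n. X (\<sigma> n)) ` {n0..})" using infinite_Ici[of n0] finite_imageD by blast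
  thus "infinite {y \<in> (\<Union>l. Sa l). \<bar>y - x\<bar> < \<epsilon>}" using sub finite_subset by blast
qed

end

theorem theorem1:
  fixes f :: "real \<Rightarrow> real" and N :: nat and H r \<xi> :: real
    and X :: "nat \<Rightarrow> real" and q p :: "nat \<Rightarrow> nat" and Q :: nat and xbar :: real
  assumes N: "N \<ge> 1" and H: "H > 0" and r: "r > 1" and xi: "\<xi> > 0"
    and holder: "\<forall>x'\<in>{0..1}. \<forall>x''\<in>{0..1}. \<bar>f x' - f x''\<bar> \<le> H * \<bar>x' - x''\<bar> powr (1 / real N)"
    and run: "PLT_run f N r \<xi> X q p"
    and pQ: "\<forall>l>1. p l \<le> Q"
    and lim: "seq_limit_point X xbar"
  shows "(0 < xbar \<and> xbar < 1 \<longrightarrow>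
            (\<exists>\<sigma>. strict_mono \<sigma> \<and> (\<forall>n. \<sigma> n \<ge> 1) \<and> (\<forall>n. X (\<sigma> n) < xbar) \<and>
                 (\<lambda>n. X (\<sigma> n)) \<longlonglongrightarrow> xbar) \<and>
            (\<exists>\<sigma>. strict_mono \<sigma> \<and> (\<forall>n. \<sigma> n \<ge> 1) \<and> (\<forall>n. X (\<sigma> n) > xbar) \<and>
                 (\<lambda>n. X (\<sigma> n)) \<longlonglongrightarrow> xbar))
       \<and> (finite {x. loc_min_01 f x \<or> loc_max_01 f x} \<longrightarrow> loc_min_01 f xbar)
       \<and> (\<forall>xhat. seq_limit_point X xhat \<longrightarrow> f xbar = f xhat)
       \<and> (\<forall>k\<ge>1. f (X k) \<ge> f xbar)"
proof -
  interpret C: plt_conc f N H r \<xi> X q p using N H r xi holder run by unfold_locales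
  interpret A: plt_abs C.Sa C.Ca C.\<rho>a f N H "(1 - 1 / r) / 2" "(r - 1) * \<xi>" "r * max H \<xi>" Q
    by (rule C.abs_inst[OF pQ])
  have cont: "continuous_on {0..1} f" by (rule holder_cont[OF N H holder])
  have ivg: "f (X k) \<ge> f x" if "seq_limit_point X x" "k \<ge> 1" for x k
    using A.iv[OF C.lp_of[OF that(1)] C.X_in_Sa[OF that(2)]] .
  have iv: "\<forall>k\<ge>1. f (X k) \<ge> f xbar" using ivg[OF lim] by blast
  have le: "f x1 \<le> f x2" if l1: "seq_limit_point X x1" and l2: "seq_limit_point X x2" for x1 x2
  proof -
    obtain \<sigma> where \<sigma>: "strict_mono \<sigma>" "\<forall>n. \<sigma> n \<ge> 1" "(\<lambda>n. X (\<sigma> n)) \<longlonglongrightarrow> x2"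
      using l2 by (auto simp: seq_limit_point_def)
    have x2: "x2 \<in> {0..1}" using A.limpt01[OF C.lp_of[OF l2]] .
    have "(\<lambda>n. f (X (\<sigma> n))) \<longlonglongrightarrow> f x2"
      using continuous_on_tendsto_compose[OF cont \<sigma>(3) x2] C.X01 \<sigma>(2) by simp
    moreover have "\<forall>n\<ge>0. f x1 \<le> f (X (\<sigma> n))" using ivg[OF l1] \<sigma>(2) by blast
    ultimately show ?thesis by (intro LIMSEQ_le_const) auto
  qed
  have iii: "\<forall>xhat. seq_limit_point X xhat \<longrightarrow> f xbar = f xhat"
    using le[OF lim] le[OF _ lim] by (meson order_antisym)
  have lpx: "limpt C.Sa xbar" by (rule C.lp_of[OF lim])
  have xb01: "xbar \<in> {0..1}" by (rule A.limpt01[OF lpx])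
  have R: "\<exists>k\<ge>1. xbar < X k \<and> X k < xbar + \<epsilon>" if a1: "xbar < 1" and a2: "\<epsilon> > 0" for \<epsilon>
  proof -
    obtain y where "y \<in> (\<Union>l. C.Sa l)" "xbar < y" "y < xbar + \<epsilon>" using A.right_side[OF lpx a1 a2] by blast
    thus ?thesis using C.U_eq by auto
  qed
  have L: "\<exists>k\<ge>1. xbar - \<epsilon> < X k \<and> X k < xbar" if a1: "xbar > 0" and a2: "\<epsilon> > 0" for \<epsilon>
  proof -
    obtain y where "y \<in> (\<Union>l. C.Sa l)" "xbar - \<epsilon> < y" "y < xbar" using A.left_side[OF lpx a1 a2] by blast
    thus ?thesis using C.U_eq by auto
  qed
  have i: "0 < xbar \<and> xbar < 1 \<longrightarrow>
            (\<exists>\<sigma>. strict_mono \<sigma> \<and> (\<forall>n. \<sigma> n \<ge> 1) \<and> (\<forall>n. X (\<sigma> n) < xbar) \<and>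
                 (\<lambda>n. X (\<sigma> n)) \<longlonglongrightarrow> xbar) \<and>
            (\<exists>\<sigma>. strict_mono \<sigma> \<and> (\<forall>n. \<sigma> n \<ge> 1) \<and> (\<forall>n. X (\<sigma> n) > xbar) \<and>
                 (\<lambda>n. X (\<sigma> n)) \<longlonglongrightarrow> xbar)"
    using subseq_left[of xbar X] subseq_right[of xbar X] R L by blast
  have ii: "finite {x. loc_min_01 f x \<or> loc_max_01 f x} \<longrightarrow> loc_min_01 f xbar"
  proof
    assume fin: "finite {x. loc_min_01 f x \<or> loc_max_01 f x}"
    show "loc_min_01 f xbar"
    proof (rule loc_min_from_sides[OF cont fin xb01])
      fix \<epsilon> :: real assume "xbar < 1" "\<epsilon> > 0"
      then obtain k where "k \<ge> 1" "xbar < X k" "X k < xbar + \<epsilon>" using R by blast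
      thus "\<exists>w. xbar < w \<and> w < xbar + \<epsilon> \<and> f w \<ge> f xbar" using iv by blast
    next
      fix \<epsilon> :: real assume "xbar > 0" "\<epsilon> > 0"
      then obtain k where "k \<ge> 1" "xbar - \<epsilon> < X k" "X k < xbar" using L by blast
      thus "\<exists>w. xbar - \<epsilon> < w \<and> w < xbar \<and> f w \<ge> f xbar" using iv by blast
    qed
  qed
  show ?thesis using i ii iii iv by blast
qed


end
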